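(* Both IFLS-H and IFLS-S (defined in the context) can be solved optimally in polynomial time, i.e., there is an algorithm that, given an instance, outputs an optimal purchased set $\mathcal{V}'$ together with optimal anchor assignments $(v_u^l, v_u^r)$, in time polynomial in the instance size (in $V$ and the number $(V-1)K+1$ of virtual views).
   Context: Captured views are $\mathcal{V}=\{1,2,\dots,V\}$. For a positive integer $K$, the virtual views are $\mathcal{U}=\{1+k/K : k=0,1,\dots,(V-1)K\}$. A distribution $q:\mathcal{U}\to[0,1]$ with $\sum_u q_u=1$ gives the fraction of peers requesting each virtual view $u$. For each $u\in\mathcal{U}$ and $v^l,v^r\in\mathcal{V}$ with $v^l\le u\le v^r$, a distortion value $D_u(v^l,v^r)\ge 0$ is given, assumed monotone: $D_u(v',v^r)\ge D_u(v,v^r)$ whenever $v'<v<u$, and $D_u(v^l,v)\le D_u(v^l,v')$ whenever $u<v<v'$. A feasible solution consists of a purchased set $\mathcal{V}'\subseteq\mathcal{V}$ and, for every $u\in\mathcal{U}$, anchors $v_u^l,v_u^r\in\mathcal{V}'$ with $v_u^l\le u\le v_u^r$. IFLS-H: given also an integer $B_{\max}$, minimize $\sum_u q_u D_u(v_u^l,v_u^r)$ over feasible solutions with $|\mathcal{V}'|\le B_{\max}$. IFLS-S: given also an access price $a\ge 0$, minimize $\sum_u q_u D_u(v_u^l,v_u^r)+a|\mathcal{V}'|$ over feasible solutions. *)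

theory Defs
  imports Complex_Main
begin

definition vu :: "nat \<Rightarrow> nat \<Rightarrow> real" where
  "vu K k = 1 + real k / real K"

definition virt_views :: "nat \<Rightarrow> nat \<Rightarrow> real set" where
  "virt_views V K = vu K ` {0..(V - 1) * K}"

definition feasible :: "nat \<Rightarrow> nat \<Rightarrow> nat set \<Rightarrow> (real \<Rightarrow> nat) \<Rightarrow> (real \<Rightarrow> nat) \<Rightarrow> bool" where
  "feasible V K S l r \<longleftrightarrow> S \<subseteq> {1..V} \<and>
     (\<forall>u\<in>virt_views V K. l u \<in> S \<and> r u \<in> S \<and> real (l u) \<le> u \<and> u \<le> real (r u))"

definition distortion :: "nat \<Rightarrow> nat \<Rightarrow> (real \<Rightarrow> real) \<Rightarrow> (real \<Rightarrow> nat \<Rightarrow> nat \<Rightarrow> real)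
    \<Rightarrow> (real \<Rightarrow> nat) \<Rightarrow> (real \<Rightarrow> nat) \<Rightarrow> real" where
  "distortion V K q D l r = (\<Sum>u\<in>virt_views V K. q u * D u (l u) (r u))"

definition valid_instance :: "nat \<Rightarrow> nat \<Rightarrow> (real \<Rightarrow> real) \<Rightarrow> (real \<Rightarrow> nat \<Rightarrow> nat \<Rightarrow> real) \<Rightarrow> bool" where
  "valid_instance V K q D \<longleftrightarrow> 1 \<le> V \<and> 1 \<le> K \<and>
     (\<forall>u\<in>virt_views V K. 0 \<le> q u \<and> q u \<le> 1) \<and>
     (\<Sum>u\<in>virt_views V K. q u) = 1 \<and>
     (\<forall>u\<in>virt_views V K. \<forall>vl\<in>{1..V}. \<forall>vr\<in>{1..V}.
        real vl \<le> u \<and> u \<le> real vr \<longrightarrow> 0 \<le> D u vl vr) \<and>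
     (\<forall>u\<in>virt_views V K. \<forall>vr\<in>{1..V}. \<forall>v'\<in>{1..V}. \<forall>v\<in>{1..V}.
        u \<le> real vr \<and> v' < v \<and> real v < u \<longrightarrow> D u v vr \<le> D u v' vr) \<and>
     (\<forall>u\<in>virt_views V K. \<forall>vl\<in>{1..V}. \<forall>v\<in>{1..V}. \<forall>v'\<in>{1..V}.
        real vl \<le> u \<and> u < real v \<and> v < v' \<longrightarrow> D u vl v \<le> D u vl v')"

definition IFLS_H_opt :: "nat \<Rightarrow> nat \<Rightarrow> (real \<Rightarrow> real) \<Rightarrow> (real \<Rightarrow> nat \<Rightarrow> nat \<Rightarrow> real) \<Rightarrow> nat
    \<Rightarrow> nat set \<Rightarrow> (real \<Rightarrow> nat) \<Rightarrow> (real \<Rightarrow> nat) \<Rightarrow> bool" where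
  "IFLS_H_opt V K q D B S l r \<longleftrightarrow> feasible V K S l r \<and> card S \<le> B \<and>
     (\<forall>S' l' r'. feasible V K S' l' r' \<and> card S' \<le> B \<longrightarrow>
        distortion V K q D l r \<le> distortion V K q D l' r')"

definition IFLS_S_opt :: "nat \<Rightarrow> nat \<Rightarrow> (real \<Rightarrow> real) \<Rightarrow> (real \<Rightarrow> nat \<Rightarrow> nat \<Rightarrow> real) \<Rightarrow> real
    \<Rightarrow> nat set \<Rightarrow> (real \<Rightarrow> nat) \<Rightarrow> (real \<Rightarrow> nat) \<Rightarrow> bool" where
  "IFLS_S_opt V K q D a S l r \<longleftrightarrow> feasible V K S l r \<and>
     (\<forall>S' l' r'. feasible V K S' l' r' \<longrightarrow>
        distortion V K q D l r + a * real (card S) \<le> distortion V K q D l' r' + a * real (card S'))"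

section \<open>Machine model: a unit-cost real RAM (no floor, no real-to-integer conversion)\<close>

record env =
  eV :: nat
  eK :: nat
  eB :: nat
  eA :: real
  eQ :: "real \<Rightarrow> real"
  eD :: "real \<Rightarrow> nat \<Rightarrow> nat \<Rightarrow> real"

text \<open>Machine state: natural-number registers and memory, real registers and memory,
  and the output (purchased set; anchors indexed by virtual-view index k).\<close>
record st =
  nr :: "nat \<Rightarrow> nat"
  rr :: "nat \<Rightarrow> real"
  nm :: "nat \<Rightarrow> nat"
  rm :: "nat \<Rightarrow> real"
  obuy :: "nat set"
  oanc :: "nat \<Rightarrow> nat \<times> nat"

datatype test = NLess nat nat | NEq nat nat | RLe nat nat

datatype cmd =
    Skip
  | NConst nat nat
  | NAdd nat nat nat
  | NSub nat nat nat
  | NLoad nat nat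
  | NStore nat nat
  | RZero nat | ROne nat
  | RAdd nat nat nat | RSub nat nat nat | RMul nat nat nat
  | RLoad nat nat
  | RStore nat nat
  | ReadV nat | ReadK nat | ReadB nat
  | ReadA nat
  | ReadQ nat nat
  | ReadD nat nat nat nat
  | OutBuy nat
  | OutAnc nat nat nat
  | Seq cmd cmd
  | If test cmd cmd
  | While test cmd

fun tval :: "test \<Rightarrow> st \<Rightarrow> bool" where
  "tval (NLess i j) s = (nr s i < nr s j)"
| "tval (NEq i j) s = (nr s i = nr s j)"
| "tval (RLe i j) s = (rr s i \<le> rr s j)"

fun is_atom :: "cmd \<Rightarrow> bool" where
  "is_atom (Seq _ _) = False"
| "is_atom (If _ _ _) = False"
| "is_atom (While _ _) = False"
| "is_atom _ = True"

fun atom :: "env \<Rightarrow> cmd \<Rightarrow> st \<Rightarrow> st" where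
  "atom e Skip s = s"
| "atom e (NConst i c) s = s\<lparr>nr := (nr s)(i := c)\<rparr>"
| "atom e (NAdd i j k) s = s\<lparr>nr := (nr s)(i := nr s j + nr s k)\<rparr>"
| "atom e (NSub i j k) s = s\<lparr>nr := (nr s)(i := nr s j - nr s k)\<rparr>"
| "atom e (NLoad i j) s = s\<lparr>nr := (nr s)(i := nm s (nr s j))\<rparr>"
| "atom e (NStore i j) s = s\<lparr>nm := (nm s)(nr s i := nr s j)\<rparr>"
| "atom e (RZero i) s = s\<lparr>rr := (rr s)(i := 0)\<rparr>"
| "atom e (ROne i) s = s\<lparr>rr := (rr s)(i := 1)\<rparr>"
| "atom e (RAdd i j k) s = s\<lparr>rr := (rr s)(i := rr s j + rr s k)\<rparr>"
| "atom e (RSub i j k) s = s\<lparr>rr := (rr s)(i := rr s j - rr s k)\<rparr>"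
| "atom e (RMul i j k) s = s\<lparr>rr := (rr s)(i := rr s j * rr s k)\<rparr>"
| "atom e (RLoad i j) s = s\<lparr>rr := (rr s)(i := rm s (nr s j))\<rparr>"
| "atom e (RStore i j) s = s\<lparr>rm := (rm s)(nr s i := rr s j)\<rparr>"
| "atom e (ReadV i) s = s\<lparr>nr := (nr s)(i := eV e)\<rparr>"
| "atom e (ReadK i) s = s\<lparr>nr := (nr s)(i := eK e)\<rparr>"
| "atom e (ReadB i) s = s\<lparr>nr := (nr s)(i := eB e)\<rparr>"
| "atom e (ReadA i) s = s\<lparr>rr := (rr s)(i := eA e)\<rparr>"
| "atom e (ReadQ i j) s = s\<lparr>rr := (rr s)(i := eQ e (vu (eK e) (nr s j)))\<rparr>"
| "atom e (ReadD i j k m) s =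
     s\<lparr>rr := (rr s)(i := eD e (vu (eK e) (nr s j)) (nr s k) (nr s m))\<rparr>"
| "atom e (OutBuy i) s = s\<lparr>obuy := insert (nr s i) (obuy s)\<rparr>"
| "atom e (OutAnc i j k) s = s\<lparr>oanc := (oanc s)(nr s i := (nr s j, nr s k))\<rparr>"
| "atom e (Seq _ _) s = s"
| "atom e (If _ _ _) s = s"
| "atom e (While _ _) s = s"

inductive exec :: "env \<Rightarrow> cmd \<Rightarrow> st \<Rightarrow> st \<Rightarrow> nat \<Rightarrow> bool" where
  Atom: "is_atom c \<Longrightarrow> exec e c s (atom e c s) 1"
| Seq: "exec e c1 s s1 n1 \<Longrightarrow> exec e c2 s1 s2 n2 \<Longrightarrow> exec e (Seq c1 c2) s s2 (n1 + n2)"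
| IfT: "tval b s \<Longrightarrow> exec e c1 s t n \<Longrightarrow> exec e (If b c1 c2) s t (n + 1)"
| IfF: "\<not> tval b s \<Longrightarrow> exec e c2 s t n \<Longrightarrow> exec e (If b c1 c2) s t (n + 1)"
| WhileF: "\<not> tval b s \<Longrightarrow> exec e (While b c) s s 1"
| WhileT: "tval b s \<Longrightarrow> exec e c s s1 n1 \<Longrightarrow> exec e (While b c) s1 t n2 \<Longrightarrow>
           exec e (While b c) s t (n1 + n2 + 1)"

definition init_st :: st where
  "init_st = \<lparr>nr = (\<lambda>_. 0), rr = (\<lambda>_. 0), nm = (\<lambda>_. 0), rm = (\<lambda>_. 0),
              obuy = {}, oanc = (\<lambda>_. (0, 0))\<rparr>"

definition anchors_of :: "nat \<Rightarrow> nat \<Rightarrow> st \<Rightarrow> (real \<Rightarrow> nat) \<Rightarrow> (real \<Rightarrow> nat) \<Rightarrow> bool" where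
  "anchors_of V K t l r \<longleftrightarrow>
     (\<forall>k\<in>{0..(V - 1) * K}. l (vu K k) = fst (oanc t k) \<and> r (vu K k) = snd (oanc t k))"

definition inst_size :: "nat \<Rightarrow> nat \<Rightarrow> nat" where
  "inst_size V K = V + ((V - 1) * K + 1)"

end

theory Submission
  imports Defs
begin


definition spec :: "env \<Rightarrow> cmd \<Rightarrow> st \<Rightarrow> (st \<Rightarrow> nat \<Rightarrow> bool) \<Rightarrow> bool" where
  "spec e c s Q \<longleftrightarrow> (\<exists>t n. exec e c s t n \<and> Q t n)"

lemma spec_atom: "is_atom c \<Longrightarrow> Q (atom e c s) 1 \<Longrightarrow> spec e c s Q"
  unfolding spec_def by (blast intro: exec.Atom)

lemma spec_seq: "spec e c1 s (\<lambda>s1 n1. spec e c2 s1 (\<lambda>t n2. Q t (n1 + n2))) \<Longrightarrow> spec e (Seq c1 c2) s Q"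
  unfolding spec_def by (blast intro: exec.Seq)

lemma spec_if: "(tval b s \<Longrightarrow> spec e c1 s (\<lambda>t n. Q t (Suc n))) \<Longrightarrow>
   (\<not> tval b s \<Longrightarrow> spec e c2 s (\<lambda>t n. Q t (Suc n))) \<Longrightarrow> spec e (If b c1 c2) s Q"
  unfolding spec_def by (cases "tval b s") (metis exec.IfT Suc_eq_plus1, metis exec.IfF Suc_eq_plus1)

lemma spec_mono: "spec e c s P \<Longrightarrow> (\<And>t n. P t n \<Longrightarrow> Q t n) \<Longrightarrow> spec e c s Q"
  unfolding spec_def by blast

lemma spec_while_aux:
  assumes step: "\<And>s. I s \<Longrightarrow> tval b s \<Longrightarrow> spec e c s (\<lambda>t n. I t \<and> \<mu> t < \<mu> s \<and> n \<le> T)"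
  shows "I s \<Longrightarrow> \<exists>t n. exec e (While b c) s t n \<and> I t \<and> \<not> tval b t \<and> n \<le> \<mu> s * (T + 1) + 1"
proof (induction "\<mu> s" arbitrary: s rule: less_induct)
  case less
  show ?case
  proof (cases "tval b s")
    case False
    then show ?thesis using exec.WhileF[OF False] less.prems by fastforce
  next
    case True
    from step[OF less.prems True] obtain s1 n1 where
      ex1: "exec e c s s1 n1" and I1: "I s1" and mu: "\<mu> s1 < \<mu> s" and n1: "n1 \<le> T"
      unfolding spec_def by blast
    from less.hyps[OF mu I1] obtain t n2 where
      ex2: "exec e (While b c) s1 t n2" and It: "I t" "\<not> tval b t" and n2: "n2 \<le> \<mu> s1 * (T + 1) + 1"
      by blast
    have "n1 + n2 + 1 \<le> \<mu> s * (T + 1) + 1"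
    proof -
      have "\<mu> s1 * (T + 1) + (T + 1) \<le> \<mu> s * (T + 1)"
        using mu by (metis Suc_leI add.commute mult_Suc mult_le_mono1)
      then show ?thesis using n1 n2 by linarith
    qed
    then show ?thesis using exec.WhileT[OF True ex1 ex2] It by blast
  qed
qed

lemma spec_while:
  assumes "I s"
    and "\<And>s. I s \<Longrightarrow> tval b s \<Longrightarrow> spec e c s (\<lambda>t n. I t \<and> \<mu> t < \<mu> s \<and> n \<le> T)"
    and "\<And>t n. I t \<Longrightarrow> \<not> tval b t \<Longrightarrow> n \<le> \<mu> s * (T + 1) + 1 \<Longrightarrow> Q t n"
  shows "spec e (While b c) s Q"
  using spec_while_aux[of I b e c \<mu> T s] assms unfolding spec_def by blast

definition MUL :: "nat \<Rightarrow> nat \<Rightarrow> nat \<Rightarrow> nat \<Rightarrow> nat \<Rightarrow> cmd" where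
  "MUL d x y c w = Seq (NConst d 0) (Seq (NConst c 0) (Seq (NConst w 1)
     (While (NLess c y) (Seq (NAdd d d x) (NAdd c c w)))))"

lemma MUL_spec:
  assumes "distinct [d, x, y, c, w]"
    and "\<And>n. n \<le> 3 * nr s y + 4 \<Longrightarrow> Q (s\<lparr>nr := (nr s)(d := nr s x * nr s y, c := nr s y, w := 1)\<rparr>) n"
  shows "spec e (MUL d x y c w) s Q"
  unfolding MUL_def
  apply (rule spec_seq, rule spec_atom, simp)+
  apply simp
  apply (rule spec_while[where I = "\<lambda>t. \<exists>i\<le>nr s y. t = s\<lparr>nr := (nr s)(d := nr s x * i, c := i, w := 1)\<rparr>"
        and \<mu> = "\<lambda>t. nr s y - nr t c" and T = 2])
    apply (rule exI[of _ 0]) using assms(1) apply (simp add: fun_upd_twist)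
   apply (erule exE)
   apply (rule spec_seq, rule spec_atom, simp, rule spec_atom, simp)
   using assms(1) apply (auto simp: fun_upd_twist)[1]
   apply (rule_tac x="Suc i" in exI) apply (simp add: fun_eq_iff)
  using assms(1) apply clarsimp
  subgoal premises p for n
    using p assms(2)[of "Suc (Suc (Suc n))"] by (simp add: le_antisym)
  done


definition kk :: "env \<Rightarrow> nat \<Rightarrow> nat" where "kk e b = (b - 1) * eK e"
definition Qe :: "env \<Rightarrow> nat \<Rightarrow> real" where "Qe e k = eQ e (vu (eK e) k)"
definition DDe :: "env \<Rightarrow> nat \<Rightarrow> nat \<Rightarrow> nat \<Rightarrow> real" where "DDe e k x y = eD e (vu (eK e) k) x y"
definition stepf :: "env \<Rightarrow> nat \<Rightarrow> real \<times> nat \<times> nat \<Rightarrow> nat \<Rightarrow> nat \<Rightarrow> real \<times> nat \<times> nat" where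
  "stepf e k p x y = (if fst p \<le> DDe e k x y then p else (DDe e k x y, (x, y)))"
definition sel4 :: "env \<Rightarrow> nat \<Rightarrow> nat \<Rightarrow> nat \<Rightarrow> nat \<Rightarrow> real \<times> nat \<times> nat" where
  "sel4 e k a b c = stepf e k (stepf e k (stepf e k (DDe e k a b, (a, b)) a c) b b) b c"
definition ptk :: "env \<Rightarrow> nat \<Rightarrow> nat \<Rightarrow> nat \<Rightarrow> nat \<Rightarrow> real" where
  "ptk e k a b c = Qe e k * fst (sel4 e k a b c)"
definition seg :: "env \<Rightarrow> nat \<Rightarrow> nat \<Rightarrow> real" where
  "seg e b c = (\<Sum>k\<in>{kk e b<..<kk e c}. Qe e k * DDe e k b c)"

primrec G :: "env \<Rightarrow> nat \<Rightarrow> nat \<Rightarrow> nat \<Rightarrow> real" where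
  "G e 0 a b = 0"
| "G e (Suc j) a b = Min ((\<lambda>c. ptk e (kk e b) a b c + seg e b c + eA e +
      (if c = eV e then ptk e (kk e (eV e)) b (eV e) (eV e) else G e j b c)) `
      {c. b < c \<and> c \<le> eV e \<and> (c = eV e \<or> 1 \<le> j)})"

definition candG :: "env \<Rightarrow> nat \<Rightarrow> nat \<Rightarrow> nat \<Rightarrow> nat \<Rightarrow> real" where
  "candG e j a b c = ptk e (kk e b) a b c + seg e b c + eA e +
      (if c = eV e then ptk e (kk e (eV e)) b (eV e) (eV e) else G e (j - 1) b c)"

definition allowed :: "env \<Rightarrow> nat \<Rightarrow> nat \<Rightarrow> nat set" where
  "allowed e j b = {c. b < c \<and> c \<le> eV e \<and> (c = eV e \<or> 2 \<le> j)}"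

lemma G_eq: "1 \<le> j \<Longrightarrow> G e j a b = Min (candG e j a b ` allowed e j b)"
  apply (cases j) apply simp
  apply (simp add: candG_def allowed_def)
  apply (rule arg_cong[where f=Min])
  apply (rule image_cong)
  apply simp
  apply simp
  done

lemma allowed_fin: "finite (allowed e j b)"
  unfolding allowed_def by (rule finite_subset[of _ "{..eV e}"]) auto

lemma G_le: "1 \<le> j \<Longrightarrow> c \<in> allowed e j b \<Longrightarrow> G e j a b \<le> candG e j a b c"
  by (simp add: G_eq allowed_fin)

lemma stepf_le1: "fst (stepf e k p x y) \<le> fst p" unfolding stepf_def by simp
lemma stepf_le2: "fst (stepf e k p x y) \<le> DDe e k x y" unfolding stepf_def by simp
lemma stepf_pair: "snd (stepf e k p x y) = snd p \<or> snd (stepf e k p x y) = (x, y)" unfolding stepf_def by simp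
lemma stepf_val: "DDe e k (fst (snd p)) (snd (snd p)) = fst p \<Longrightarrow>
   DDe e k (fst (snd (stepf e k p x y))) (snd (snd (stepf e k p x y))) = fst (stepf e k p x y)"
  unfolding stepf_def by simp

lemma sel4_props:
  shows "fst (sel4 e k a b c) \<le> DDe e k a b" "fst (sel4 e k a b c) \<le> DDe e k a c"
    "fst (sel4 e k a b c) \<le> DDe e k b b" "fst (sel4 e k a b c) \<le> DDe e k b c"
    "snd (sel4 e k a b c) \<in> {(a,b),(a,c),(b,b),(b,c)}"
    "DDe e k (fst (snd (sel4 e k a b c))) (snd (snd (sel4 e k a b c))) = fst (sel4 e k a b c)"
proof -
  define p0 where "p0 = (DDe e k a b, (a, b))"
  define p1 where "p1 = stepf e k p0 a c"
  define p2 where "p2 = stepf e k p1 b b"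
  define p3 where "p3 = stepf e k p2 b c"
  have s: "sel4 e k a b c = p3" unfolding sel4_def p0_def p1_def p2_def p3_def by simp
  have l1: "fst p1 \<le> fst p0" "fst p2 \<le> fst p1" "fst p3 \<le> fst p2"
    unfolding p1_def p2_def p3_def by (rule stepf_le1)+
  have l2: "fst p1 \<le> DDe e k a c" "fst p2 \<le> DDe e k b b" "fst p3 \<le> DDe e k b c"
    unfolding p1_def p2_def p3_def by (rule stepf_le2)+
  show "fst (sel4 e k a b c) \<le> DDe e k a b" using l1 unfolding s p0_def by simp
  show "fst (sel4 e k a b c) \<le> DDe e k a c" using l1 l2 unfolding s by simp
  show "fst (sel4 e k a b c) \<le> DDe e k b b" using l1 l2 unfolding s by simp
  show "fst (sel4 e k a b c) \<le> DDe e k b c" using l1 l2 unfolding s by simp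
  have "snd p1 = snd p0 \<or> snd p1 = (a, c)" unfolding p1_def by (rule stepf_pair)
  moreover have "snd p2 = snd p1 \<or> snd p2 = (b, b)" unfolding p2_def by (rule stepf_pair)
  moreover have "snd p3 = snd p2 \<or> snd p3 = (b, c)" unfolding p3_def by (rule stepf_pair)
  ultimately show "snd (sel4 e k a b c) \<in> {(a,b),(a,c),(b,b),(b,c)}" unfolding s p0_def by auto
  have "DDe e k (fst (snd p0)) (snd (snd p0)) = fst p0" unfolding p0_def by simp
  then have "DDe e k (fst (snd p1)) (snd (snd p1)) = fst p1" unfolding p1_def by (rule stepf_val)
  then have "DDe e k (fst (snd p2)) (snd (snd p2)) = fst p2" unfolding p2_def by (rule stepf_val)
  then have "DDe e k (fst (snd p3)) (snd (snd p3)) = fst p3" unfolding p3_def by (rule stepf_val)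
  then show "DDe e k (fst (snd (sel4 e k a b c))) (snd (snd (sel4 e k a b c))) = fst (sel4 e k a b c)"
    unfolding s .
qed

lemma sum_split3:
  fixes f :: "nat \<Rightarrow> real"
  assumes "m < p" "p \<le> n"
  shows "(\<Sum>k\<in>{m..n}. f k) = f m + (\<Sum>k\<in>{m<..<p}. f k) + (\<Sum>k\<in>{p..n}. f k)"
proof -
  have "{m..n} = insert m ({m<..<p} \<union> {p..n})" using assms by auto
  moreover have "m \<notin> {m<..<p} \<union> {p..n}" using assms by auto
  moreover have "{m<..<p} \<inter> {p..n} = {}" by auto
  ultimately show ?thesis by (simp add: sum.union_disjoint add.assoc)
qed

locale alg =
  fixes e :: env and cap :: nat
  assumes valid: "valid_instance (eV e) (eK e) (eQ e) (eD e)"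
    and pr_nonneg: "0 \<le> eA e" and V2: "2 \<le> eV e" and cap2: "2 \<le> cap"
begin

abbreviation "V \<equiv> eV e"
abbreviation "K \<equiv> eK e"
abbreviation "pr \<equiv> eA e"

lemma K1: "1 \<le> K" using valid[unfolded valid_instance_def, THEN conjunct2, THEN conjunct1] .

lemma q_nn: "\<forall>u\<in>virt_views V K. 0 \<le> eQ e u \<and> eQ e u \<le> 1"
  using valid[unfolded valid_instance_def, THEN conjunct2, THEN conjunct2, THEN conjunct1] .

lemma q_sum: "(\<Sum>u\<in>virt_views V K. eQ e u) = 1"
  using valid[unfolded valid_instance_def, THEN conjunct2, THEN conjunct2, THEN conjunct2, THEN conjunct1] .

lemma D_monoL: "\<forall>u\<in>virt_views V K. \<forall>vr\<in>{1..V}. \<forall>v'\<in>{1..V}. \<forall>v\<in>{1..V}.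
        u \<le> real vr \<and> v' < v \<and> real v < u \<longrightarrow> eD e u v vr \<le> eD e u v' vr"
  using valid[unfolded valid_instance_def, THEN conjunct2, THEN conjunct2, THEN conjunct2, THEN conjunct2, THEN conjunct2, THEN conjunct1] .

lemma D_monoR: "\<forall>u\<in>virt_views V K. \<forall>vl\<in>{1..V}. \<forall>v\<in>{1..V}. \<forall>v'\<in>{1..V}.
        real vl \<le> u \<and> u < real v \<and> v < v' \<longrightarrow> eD e u vl v \<le> eD e u vl v'"
  using valid[unfolded valid_instance_def, THEN conjunct2, THEN conjunct2, THEN conjunct2, THEN conjunct2, THEN conjunct2, THEN conjunct2] .

lemma kk_less_iff: "1 \<le> x \<Longrightarrow> 1 \<le> y \<Longrightarrow> kk e x < kk e y \<longleftrightarrow> x < y"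
  using K1 unfolding kk_def by (simp add: less_diff_iff)

lemma kk_le_iff: "1 \<le> x \<Longrightarrow> 1 \<le> y \<Longrightarrow> kk e x \<le> kk e y \<longleftrightarrow> x \<le> y"
  using kk_less_iff by (meson not_le)

lemma kk1: "kk e 1 = 0" by (simp add: kk_def)

lemma vu_le_iff: "1 \<le> x \<Longrightarrow> vu K k \<le> real x \<longleftrightarrow> k \<le> kk e x"
proof -
  assume x: "1 \<le> x"
  have Kp: "real K > 0" using K1 by simp
  have "vu K k \<le> real x \<longleftrightarrow> real k / real K \<le> real x - 1" unfolding vu_def by (rule iffI; linarith)
  also have "\<dots> \<longleftrightarrow> real k \<le> (real x - 1) * real K" using Kp by (simp add: divide_le_eq)
  also have "(real x - 1) * real K = real (kk e x)" using x unfolding kk_def by (simp add: of_nat_diff)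
  finally show ?thesis by simp
qed

lemma vu_ge_iff: "1 \<le> x \<Longrightarrow> real x \<le> vu K k \<longleftrightarrow> kk e x \<le> k"
proof -
  assume x: "1 \<le> x"
  have Kp: "real K > 0" using K1 by simp
  have "real x \<le> vu K k \<longleftrightarrow> real x - 1 \<le> real k / real K" unfolding vu_def by (rule iffI; linarith)
  also have "\<dots> \<longleftrightarrow> (real x - 1) * real K \<le> real k" using Kp by (simp add: le_divide_eq)
  also have "(real x - 1) * real K = real (kk e x)" using x unfolding kk_def by (simp add: of_nat_diff)
  finally show ?thesis by simp
qed

lemma vu_less_iff: "1 \<le> x \<Longrightarrow> vu K k < real x \<longleftrightarrow> k < kk e x"
  using vu_ge_iff by (meson not_le)

lemma vu_gt_iff: "1 \<le> x \<Longrightarrow> real x < vu K k \<longleftrightarrow> kk e x < k"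
  using vu_le_iff by (meson not_le)

lemma vu_in: "k \<le> kk e V \<Longrightarrow> vu K k \<in> virt_views V K"
  unfolding virt_views_def kk_def by auto

lemma vu_inj: "inj_on (vu K) A"
proof (rule inj_onI)
  fix x y assume "vu K x = vu K y"
  then have "real x / real K = real y / real K" unfolding vu_def by simp
  then show "x = y" using K1 by (simp add: divide_cancel_right)
qed

lemma Q_nonneg: "k \<le> kk e V \<Longrightarrow> 0 \<le> Qe e k"
  unfolding Qe_def using q_nn vu_in by blast

lemma monoL:
  assumes "k \<le> kk e V" "1 \<le> v'" "v' < v" "v \<le> V" "kk e v < k" "1 \<le> vr" "vr \<le> V" "k \<le> kk e vr"
  shows "DDe e k v vr \<le> DDe e k v' vr"
proof -
  have u: "vu K k \<in> virt_views V K" using vu_in assms by blast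
  have "real v < vu K k" using vu_gt_iff assms by simp
  moreover have "vu K k \<le> real vr" using vu_le_iff assms by simp
  ultimately show ?thesis unfolding DDe_def
    by (intro D_monoL[rule_format, OF u]) (use assms in auto)
qed

lemma monoR:
  assumes "k \<le> kk e V" "1 \<le> vl" "vl \<le> V" "kk e vl \<le> k" "k < kk e v" "v < v'" "v' \<le> V"
  shows "DDe e k vl v \<le> DDe e k vl v'"
proof -
  have u: "vu K k \<in> virt_views V K" using vu_in assms by blast
  have v1: "1 \<le> v" using assms(5) kk_def by (cases v) auto
  have "real vl \<le> vu K k" using vu_ge_iff assms by simp
  moreover have "vu K k < real v" using vu_less_iff assms v1 by simp
  ultimately show ?thesis unfolding DDe_def
    by (intro D_monoR[rule_format, OF u]) (use assms v1 in auto)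
qed


lemma LB:
  assumes S: "S \<subseteq> {1..V}" "V \<in> S"
    and anc: "\<And>k. k \<le> kk e V \<Longrightarrow> L k \<in> S \<and> R k \<in> S \<and> kk e (L k) \<le> k \<and> k \<le> kk e (R k)"
  shows "1 \<le> j \<Longrightarrow> b \<in> S \<Longrightarrow> b < V \<Longrightarrow> 1 \<le> a \<Longrightarrow> a \<le> b \<Longrightarrow>
     (\<forall>x\<in>S. x < b \<longrightarrow> x \<le> a \<and> a < b) \<Longrightarrow> card (S \<inter> {b<..V}) \<le> j \<Longrightarrow>
     G e j a b \<le> (\<Sum>k\<in>{kk e b..kk e V}. Qe e k * DDe e k (L k) (R k)) + pr * card (S \<inter> {b<..V})"
proof (induction j arbitrary: a b)
  case 0
  then show ?case by simp
next
  case (Suc j)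
  note b = Suc.prems
  have Sfin: "finite S" using S(1) finite_subset by blast
  have S1: "\<And>x. x \<in> S \<Longrightarrow> 1 \<le> x \<and> x \<le> V" using S(1) by auto
  have Lk: "\<And>k. k \<le> kk e V \<Longrightarrow> 1 \<le> L k \<and> L k \<le> V" using anc S1 by blast
  have Rk: "\<And>k. k \<le> kk e V \<Longrightarrow> 1 \<le> R k \<and> R k \<le> V" using anc S1 by blast
  define T where "T = S \<inter> {b<..V}"
  have Tfin: "finite T" unfolding T_def using Sfin by simp
  have VT: "V \<in> T" unfolding T_def using S(2) b(3) by simp
  define c where "c = Min T"
  have cT: "c \<in> T" unfolding c_def using Tfin VT by (metis Min_in empty_iff)
  have cmin: "\<And>x. x \<in> T \<Longrightarrow> c \<le> x" unfolding c_def using Tfin by simp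
  have bc: "b < c" "c \<le> V" "c \<in> S" using cT unfolding T_def by auto
  have b1: "1 \<le> b" using b(4,5) by simp
  have gap: "\<And>x. x \<in> S \<Longrightarrow> x < c \<Longrightarrow> x \<le> b"
    using cmin unfolding T_def by (meson S1 greaterThanAtMost_iff IntI not_le)
  have kbc: "kk e b < kk e c" using kk_less_iff b1 bc by simp
  have kcV: "kk e c \<le> kk e V" using kk_le_iff bc b1 by simp
  have kb_le: "kk e b \<le> kk e V" using kbc kcV by simp
  define f where "f k = Qe e k * DDe e k (L k) (R k)" for k
  have split: "(\<Sum>k\<in>{kk e b..kk e V}. f k) = f (kk e b) + (\<Sum>k\<in>{kk e b<..<kk e c}. f k) + (\<Sum>k\<in>{kk e c..kk e V}. f k)"
    using sum_split3[OF kbc kcV] .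
  have t1: "ptk e (kk e b) a b c \<le> f (kk e b)"
  proof -
    let ?k = "kk e b"
    let ?x = "L ?k" and ?y = "R ?k"
    have xy: "?x \<in> S" "?y \<in> S" "kk e ?x \<le> ?k" "?k \<le> kk e ?y" using anc[OF kb_le] by auto
    have x1: "1 \<le> ?x" "?x \<le> V" using Lk[OF kb_le] by auto
    have y1: "1 \<le> ?y" "?y \<le> V" using Rk[OF kb_le] by auto
    have xb: "?x \<le> b" using xy(3) kk_le_iff x1 b1 by simp
    have yb: "b \<le> ?y" using xy(4) kk_le_iff y1 b1 by simp
    define y' where "y' = (if ?y = b then b else c)"
    define x' where "x' = (if ?x = b then b else a)"
    have y'p: "y' = b \<or> y' = c" "1 \<le> y'" "y' \<le> V" "?k \<le> kk e y'" using bc b1 kbc unfolding y'_def by auto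
    have "DDe e ?k ?x ?y \<ge> DDe e ?k ?x y'"
    proof (cases "?y = b")
      case True then show ?thesis unfolding y'_def by simp
    next
      case False
      then have "?y \<in> T" using yb xy(2) y1 unfolding T_def by auto
      then have "c \<le> ?y" by (rule cmin)
      show ?thesis
      proof (cases "c = ?y")
        case True then show ?thesis using False unfolding y'_def by simp
      next
        case False2: False
        show ?thesis using monoR[OF kb_le x1 xy(3) kbc _ y1(2)] \<open>c \<le> ?y\<close> False2 False
          unfolding y'_def by simp
      qed
    qed
    moreover have "DDe e ?k ?x y' \<ge> DDe e ?k x' y'"
    proof (cases "?x = b")
      case True then show ?thesis unfolding x'_def by simp
    next
      case False
      then have xa: "?x \<le> a" "a < b" using b(6) xy(1) xb by auto
      show ?thesis
      proof (cases "?x = a")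
        case True then show ?thesis using False unfolding x'_def by simp
      next
        case False2: False
        have "kk e a < ?k" using kk_less_iff xa b(4) b1 by simp
        then show ?thesis using monoL[OF kb_le x1(1) _ _ _ y'p(2) y'p(3) y'p(4), of a] xa False2 False b(3)
          unfolding x'_def by simp
      qed
    qed
    moreover have "fst (sel4 e ?k a b c) \<le> DDe e ?k x' y'"
      using sel4_props(1-4)[of e ?k a b c] y'p(1) unfolding x'_def by (cases "?x = b"; cases "y' = b") auto
    ultimately have "fst (sel4 e ?k a b c) \<le> DDe e ?k ?x ?y" by linarith
    then show ?thesis unfolding ptk_def f_def
      using Q_nonneg[OF kb_le] by (simp add: mult_left_mono)
  qed
  have t2: "seg e b c \<le> (\<Sum>k\<in>{kk e b<..<kk e c}. f k)"
    unfolding seg_def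
  proof (rule sum_mono)
    fix k assume k: "k \<in> {kk e b<..<kk e c}"
    then have kV: "k \<le> kk e V" using kcV by simp
    let ?x = "L k" and ?y = "R k"
    have xy: "?x \<in> S" "?y \<in> S" "kk e ?x \<le> k" "k \<le> kk e ?y" using anc[OF kV] by auto
    have x1: "1 \<le> ?x" "?x \<le> V" using Lk[OF kV] by auto
    have y1: "1 \<le> ?y" "?y \<le> V" using Rk[OF kV] by auto
    have "kk e ?x < kk e c" using xy(3) k by simp
    then have "?x < c" using kk_less_iff x1 b1 bc by simp
    then have xb: "?x \<le> b" using gap xy(1) by simp
    have "kk e b < kk e ?y" using xy(4) k by simp
    then have "b < ?y" using kk_less_iff y1 b1 by simp
    then have "?y \<in> T" using xy(2) y1 unfolding T_def by auto
    then have yc: "c \<le> ?y" by (rule cmin)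
    have kc: "k < kk e c" "kk e b < k" using k by auto
    have "DDe e k ?x ?y \<ge> DDe e k ?x c"
      using monoR[OF kV x1 xy(3) kc(1) _ y1(2)] yc by (cases "c = ?y") auto
    moreover have "DDe e k ?x c \<ge> DDe e k b c"
      using monoL[OF kV x1(1) _ _ kc(2) _ bc(2)] xb b(3) b1 bc kc(1) by (cases "?x = b") auto
    ultimately show "Qe e k * DDe e k b c \<le> f k"
      unfolding f_def using Q_nonneg[OF kV] by (simp add: mult_left_mono)
  qed
  have cardT: "card T = Suc (card (S \<inter> {c<..V}))"
  proof -
    have "T = insert c (S \<inter> {c<..V})"
    proof (intro equalityI subsetI)
      fix x assume x: "x \<in> T"
      then have "c \<le> x" by (rule cmin)
      with x show "x \<in> insert c (S \<inter> {c<..V})" unfolding T_def by auto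
    next
      fix x assume "x \<in> insert c (S \<inter> {c<..V})"
      then show "x \<in> T" using cT bc unfolding T_def by auto
    qed
    then show ?thesis using Sfin by simp
  qed
  show ?case
  proof (cases "c = V")
    case True
    have ca: "c \<in> allowed e (Suc j) b" unfolding allowed_def using bc True by simp
    have G1: "G e (Suc j) a b \<le> candG e (Suc j) a b c" by (rule G_le[OF _ ca]) simp
    have "card (S \<inter> {c<..V}) = 0" using True by simp
    then have cT1: "card T = 1" using cardT by simp
    have t3: "ptk e (kk e V) b V V \<le> (\<Sum>k\<in>{kk e c..kk e V}. f k)"
    proof -
      let ?k = "kk e V"
      have kV: "?k \<le> kk e V" by simp
      let ?x = "L ?k" and ?y = "R ?k"
      have xy: "?x \<in> S" "?y \<in> S" "kk e ?x \<le> ?k" "?k \<le> kk e ?y" using anc[OF kV] by auto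
      have x1: "1 \<le> ?x" "?x \<le> V" using Lk[OF kV] by auto
      have y1: "1 \<le> ?y" "?y \<le> V" using Rk[OF kV] by auto
      have yV: "?y = V" using xy(4) y1 kk_le_iff V2 by (simp add: le_antisym)
      have "fst (sel4 e ?k b V V) \<le> DDe e ?k ?x V"
      proof (cases "?x = V")
        case True then show ?thesis using sel4_props(3)[of e ?k b V V] by simp
      next
        case False
        then have "?x < c" using x1 True by simp
        then have xb: "?x \<le> b" using gap xy(1) by simp
        have kbV: "kk e b < ?k" using kbc True by simp
        have "DDe e ?k ?x V \<ge> DDe e ?k b V"
          using monoL[OF kV x1(1) _ _ kbV _ _ kV] xb b(3) V2 by (cases "?x = b") auto
        then show ?thesis using sel4_props(1)[of e ?k b V V] by linarith
      qed
      then have "ptk e ?k b V V \<le> f ?k" unfolding ptk_def f_def using yV Q_nonneg[OF kV]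
        by (simp add: mult_left_mono)
      then show ?thesis using True by simp
    qed
    have "G e (Suc j) a b \<le> ptk e (kk e b) a b c + seg e b c + pr + ptk e (kk e V) b V V"
      using G1 True unfolding candG_def by simp
    also have "\<dots> \<le> f (kk e b) + (\<Sum>k\<in>{kk e b<..<kk e c}. f k) + (\<Sum>k\<in>{kk e c..kk e V}. f k) + pr * card T"
      using t1 t2 t3 cT1 by simp
    finally show ?thesis using split unfolding T_def f_def by simp
  next
    case False
    have cV: "c < V" using False bc by simp
    have "2 \<le> card T"
    proof -
      have "{c, V} \<subseteq> T" using cT VT by simp
      then have "card {c, V} \<le> card T" using Tfin card_mono by blast
      then show ?thesis using False by simp
    qed
    then have j1: "1 \<le> j" using b(7) unfolding T_def by simp
    have ca: "c \<in> allowed e (Suc j) b" unfolding allowed_def using bc j1 by simp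
    have G1: "G e (Suc j) a b \<le> candG e (Suc j) a b c" by (rule G_le[OF _ ca]) simp
    have IH: "G e j b c \<le> (\<Sum>k\<in>{kk e c..kk e V}. Qe e k * DDe e k (L k) (R k)) + pr * card (S \<inter> {c<..V})"
    proof (rule Suc.IH[OF j1 bc(3) cV b1 less_imp_le[OF bc(1)]])
      show "\<forall>x\<in>S. x < c \<longrightarrow> x \<le> b \<and> b < c" using gap bc by simp
      show "card (S \<inter> {c<..V}) \<le> j" using cardT b(7) unfolding T_def by simp
    qed
    have "G e (Suc j) a b \<le> ptk e (kk e b) a b c + seg e b c + pr + G e j b c"
      using G1 cV unfolding candG_def by simp
    also have "\<dots> \<le> f (kk e b) + (\<Sum>k\<in>{kk e b<..<kk e c}. f k) + (\<Sum>k\<in>{kk e c..kk e V}. f k) + pr * card T"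
      using t1 t2 IH cardT unfolding f_def by (simp add: algebra_simps)
    finally show ?thesis using split unfolding T_def f_def by simp
  qed
qed

end


lemma exec_atom_inv: "exec e c s t n \<Longrightarrow> is_atom c \<Longrightarrow> t = atom e c s \<and> n = 1"
  by (induction rule: exec.induct) auto

lemma exec_seq_inv: "exec e (Seq c1 c2) s t n \<Longrightarrow> \<exists>s1 n1 n2. exec e c1 s s1 n1 \<and> exec e c2 s1 t n2 \<and> n = n1 + n2"
  by (cases rule: exec.cases) auto

lemma exec_if_inv: "exec e (If b c1 c2) s t n \<Longrightarrow>
   (tval b s \<and> (\<exists>m. exec e c1 s t m \<and> n = Suc m)) \<or> (\<not> tval b s \<and> (\<exists>m. exec e c2 s t m \<and> n = Suc m))"
  by (cases rule: exec.cases) auto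

lemma spec_atom_eq[simp]: "is_atom c \<Longrightarrow> spec e c s Q = Q (atom e c s) 1"
  unfolding spec_def using exec_atom_inv by (blast intro: exec.Atom)

lemma spec_seq_eq[simp]: "spec e (Seq c1 c2) s Q = spec e c1 s (\<lambda>s1 n1. spec e c2 s1 (\<lambda>t n2. Q t (n1 + n2)))"
  unfolding spec_def using exec_seq_inv by (blast intro: exec.Seq)

lemma spec_if_eq[simp]: "spec e (If b c1 c2) s Q =
   (if tval b s then spec e c1 s (\<lambda>t n. Q t (Suc n)) else spec e c2 s (\<lambda>t n. Q t (Suc n)))"
  unfolding spec_def using exec_if_inv
  by (cases "tval b s") (metis exec.IfT Suc_eq_plus1, metis exec.IfF Suc_eq_plus1)

abbreviation COPY :: "nat \<Rightarrow> nat \<Rightarrow> cmd" where "COPY d x \<equiv> Seq (NConst d 0) (NAdd d d x)"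
abbreviation RCOPY :: "nat \<Rightarrow> nat \<Rightarrow> cmd" where "RCOPY d x \<equiv> Seq (RZero d) (RAdd d d x)"

lemma MUL_spec2:
  assumes "distinct [d, x, y, c, w]"
    and "\<And>t n. nr t = (nr s)(d := nr s x * nr s y, c := nr s y, w := 1) \<Longrightarrow> rr t = rr s \<Longrightarrow>
       nm t = nm s \<Longrightarrow> rm t = rm s \<Longrightarrow> obuy t = obuy s \<Longrightarrow> oanc t = oanc s \<Longrightarrow>
       n \<le> 3 * nr s y + 4 \<Longrightarrow> Q t n"
  shows "spec e (MUL d x y c w) s Q"
  by (rule MUL_spec[OF assms(1)]) (rule assms(2); simp)

definition KK :: "nat \<Rightarrow> nat \<Rightarrow> cmd" where
  "KK dst src = Seq (NSub 18 src 3) (MUL dst 1 18 14 16)"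

lemma KK_spec:
  assumes "dst \<notin> {1, 18, 14, 16}"
    and "\<And>t n. nr t = (nr s)(18 := nr s src - nr s 3, dst := (nr s src - nr s 3) * nr s 1, 14 := nr s src - nr s 3, 16 := 1)
       \<Longrightarrow> rr t = rr s \<Longrightarrow>
       nm t = nm s \<Longrightarrow> rm t = rm s \<Longrightarrow> obuy t = obuy s \<Longrightarrow> oanc t = oanc s \<Longrightarrow>
       n \<le> 3 * (nr s src - nr s 3) + 5 \<Longrightarrow> Q t n"
  shows "spec e (KK dst src) s Q"
  unfolding KK_def spec_seq_eq
  apply (insert assms(1))
  apply (subst spec_atom_eq, simp)
  apply (rule MUL_spec2)
  apply simp
  apply (rule assms(2))
  by (auto simp: fun_eq_iff)

definition ADDR :: "nat \<Rightarrow> nat \<Rightarrow> nat \<Rightarrow> cmd" where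
  "ADDR jr ar br = Seq (MUL 13 5 jr 14 16) (Seq (MUL 19 4 ar 14 16) (Seq (NAdd 13 13 19) (NAdd 13 13 br)))"

lemma ADDR_spec:
  assumes "jr \<notin> {5, 13, 14, 16}" "ar \<notin> {4, 13, 14, 16, 19}" "br \<notin> {13, 14, 16, 19}"
    and "\<And>t n. nr t = (nr s)(13 := nr s 5 * nr s jr + nr s 4 * nr s ar + nr s br, 19 := nr s 4 * nr s ar,
             14 := nr s ar, 16 := 1) \<Longrightarrow> rr t = rr s \<Longrightarrow>
       nm t = nm s \<Longrightarrow> rm t = rm s \<Longrightarrow> obuy t = obuy s \<Longrightarrow> oanc t = oanc s \<Longrightarrow>
       n \<le> 3 * nr s jr + 3 * nr s ar + 10 \<Longrightarrow> Q t n"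
  shows "spec e (ADDR jr ar br) s Q"
  unfolding ADDR_def spec_seq_eq
  apply (insert assms(1-3))
  apply (rule MUL_spec2)
  apply simp
  apply (rule MUL_spec2)
  apply simp
  apply simp
  apply (rule assms(4))
  by (auto simp: fun_eq_iff)

definition STEP :: "nat \<Rightarrow> nat \<Rightarrow> nat \<Rightarrow> cmd" where
  "STEP rk rx ry = Seq (ReadD 5 rk rx ry) (If (RLe 4 5) Skip (Seq (RCOPY 4 5) (Seq (COPY 22 rx) (COPY 23 ry))))"

lemma STEP_spec:
  assumes "rx \<noteq> 22" "ry \<notin> {22, 23}"
    and "\<And>t n. nr t = (nr s)(22 := fst (snd (stepf e (nr s rk) (rr s 4, nr s 22, nr s 23) (nr s rx) (nr s ry))),
                          23 := snd (snd (stepf e (nr s rk) (rr s 4, nr s 22, nr s 23) (nr s rx) (nr s ry)))) \<Longrightarrow>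
           rr t = (rr s)(5 := DDe e (nr s rk) (nr s rx) (nr s ry),
                        4 := fst (stepf e (nr s rk) (rr s 4, nr s 22, nr s 23) (nr s rx) (nr s ry))) \<Longrightarrow>
       nm t = nm s \<Longrightarrow> rm t = rm s \<Longrightarrow> obuy t = obuy s \<Longrightarrow> oanc t = oanc s \<Longrightarrow>
       n \<le> 8 \<Longrightarrow> Q t n"
  shows "spec e (STEP rk rx ry) s Q"
proof (cases "rr s 4 \<le> DDe e (nr s rk) (nr s rx) (nr s ry)")
  case True
  then show ?thesis unfolding STEP_def
    apply (simp add: DDe_def)
    apply (rule assms(3))
    by (auto simp: stepf_def DDe_def fun_eq_iff)
next
  case False
  then show ?thesis unfolding STEP_def
    using assms(1,2) apply (simp add: DDe_def)
    apply (rule assms(3))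
    using assms(1,2) False by (auto simp: stepf_def DDe_def fun_eq_iff)
qed

definition PT :: "nat \<Rightarrow> nat \<Rightarrow> nat \<Rightarrow> nat \<Rightarrow> cmd" where
  "PT ra rb rc rk = Seq (ReadD 4 rk ra rb) (Seq (COPY 22 ra) (Seq (COPY 23 rb) (Seq (STEP rk ra rc)
     (Seq (STEP rk rb rb) (Seq (STEP rk rb rc) (Seq (ReadQ 3 rk) (RMul 6 3 4)))))))"

lemma PT_spec:
  assumes "ra \<notin> {22, 23}" "rb \<notin> {22, 23}" "rc \<notin> {22, 23}" "rk \<notin> {22, 23}"
    and "\<And>t n. nr t = (nr s)(22 := fst (snd (sel4 e (nr s rk) (nr s ra) (nr s rb) (nr s rc))),
                          23 := snd (snd (sel4 e (nr s rk) (nr s ra) (nr s rb) (nr s rc)))) \<Longrightarrow>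
           rr t = (rr s)(4 := fst (sel4 e (nr s rk) (nr s ra) (nr s rb) (nr s rc)),
                        5 := DDe e (nr s rk) (nr s rb) (nr s rc), 3 := Qe e (nr s rk),
                        6 := Qe e (nr s rk) * fst (sel4 e (nr s rk) (nr s ra) (nr s rb) (nr s rc))) \<Longrightarrow>
       nm t = nm s \<Longrightarrow> rm t = rm s \<Longrightarrow> obuy t = obuy s \<Longrightarrow> oanc t = oanc s \<Longrightarrow>
       n \<le> 31 \<Longrightarrow> Q t n"
  shows "spec e (PT ra rb rc rk) s Q"
  unfolding PT_def spec_seq_eq
  apply (insert assms(1-4))
  apply (simp)
  apply (rule STEP_spec)
  apply simp
  apply simp
  apply (rule STEP_spec)
  apply simp
  apply simp
  apply (rule STEP_spec)
  apply simp
  apply simp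
  apply simp
  apply (rule assms(5))
  apply (auto simp: fun_eq_iff sel4_def DDe_def Qe_def)
  done

lemma sum_gl_Suc: "m < i \<Longrightarrow> (\<Sum>k\<in>{m<..<Suc i}. f k) = (\<Sum>k\<in>{m<..<i}. f k) + (f i :: real)"
proof -
  assume mi: "m < i"
  have "{m<..<Suc i} = insert i {m<..<i}" using mi by auto
  then show ?thesis by simp
qed

lemma gl_empty[simp]: "{m<..<Suc m} = ({}::nat set)" by auto

definition SEGB :: cmd where
  "SEGB = Seq (ReadQ 3 12) (Seq (ReadD 5 12 7 9) (Seq (RMul 5 3 5) (Seq (RAdd 2 2 5) (NAdd 12 12 3))))"

definition SEG :: cmd where
  "SEG = Seq (RZero 2) (Seq (COPY 12 10) (Seq (NAdd 12 12 3) (While (NLess 12 11) SEGB)))"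

lemma SEG_spec:
  assumes one: "nr s 3 = 1" and kbc: "nr s 10 < nr s 11"
    and post: "\<And>t n. nr t = (nr s)(12 := nr s 11) \<Longrightarrow>
       rr t 2 = (\<Sum>k\<in>{nr s 10<..<nr s 11}. Qe e k * DDe e k (nr s 7) (nr s 9)) \<Longrightarrow>
       (\<And>i. i \<notin> {2, 3, 5} \<Longrightarrow> rr t i = rr s i) \<Longrightarrow>
       nm t = nm s \<Longrightarrow> rm t = rm s \<Longrightarrow> obuy t = obuy s \<Longrightarrow> oanc t = oanc s \<Longrightarrow>
       n \<le> 6 * (nr s 11 - nr s 10) + 6 \<Longrightarrow> Q t n"
  shows "spec e SEG s Q"
proof -
  define I where "I t \<longleftrightarrow> (\<exists>i. nr s 10 < i \<and> i \<le> nr s 11 \<and> nr t = (nr s)(12 := i) \<and>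
      rr t 2 = (\<Sum>k\<in>{nr s 10<..<i}. Qe e k * DDe e k (nr s 7) (nr s 9)) \<and>
      (\<forall>j. j \<notin> {2, 3, 5} \<longrightarrow> rr t j = rr s j) \<and>
      nm t = nm s \<and> rm t = rm s \<and> obuy t = obuy s \<and> oanc t = oanc s)" for t :: st
  show ?thesis
    unfolding SEG_def spec_seq_eq
    apply (simp add: one)
    apply (rule spec_while[where I = I and \<mu> = "\<lambda>t. nr s 11 - nr t 12" and T = 5])
    subgoal unfolding I_def using kbc by (intro exI[of _ "Suc (nr s 10)"]) (auto simp: fun_eq_iff)
    subgoal for t
      unfolding I_def SEGB_def
      apply (elim exE conjE)
      subgoal for i
        apply (simp add: one)
        apply (rule conjI)
         apply (rule exI[of _ "Suc i"])
         apply (auto simp: fun_eq_iff Qe_def DDe_def sum_gl_Suc)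
        done
      done
    subgoal for t n
      unfolding I_def
      apply (elim exE conjE)
      subgoal for i
        apply (rule post)
        apply (auto simp: fun_eq_iff)
        done
      done
    done
qed


definition CAND :: cmd where
  "CAND = Seq (KK 11 9) (Seq (PT 8 7 9 10) (Seq (RCOPY 8 6) (Seq SEG (Seq (RAdd 8 8 2) (Seq (RAdd 8 8 0)
   (If (NEq 9 0) (Seq (PT 7 0 0 21) (RAdd 8 8 6))
       (Seq (NSub 26 6 3) (Seq (ADDR 26 7 9) (Seq (RLoad 5 13) (RAdd 8 8 5))))))))))"

context alg
begin

definition addr :: "nat \<Rightarrow> nat \<Rightarrow> nat \<Rightarrow> nat" where
  "addr j a b = (V + 1) * (V + 1) * j + (V + 1) * a + b"

definition base :: "st \<Rightarrow> bool" where
  "base s \<longleftrightarrow> nr s 0 = V \<and> nr s 1 = K \<and> nr s 3 = 1 \<and> nr s 4 = V + 1 \<and>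
     nr s 5 = (V + 1) * (V + 1) \<and> nr s 21 = kk e V \<and> rr s 0 = pr"

lemma kk_fold[simp]: "(x - Suc 0) * K = kk e x" by (simp add: kk_def)

lemma CAND_spec:
  assumes bs: "base s"
    and regs: "nr s 6 = j" "nr s 8 = a" "nr s 7 = b" "nr s 9 = c" "nr s 10 = kk e b"
    and rng: "1 \<le> a" "a \<le> b" "b < c" "c \<le> V" "1 \<le> j" "j \<le> V"
    and tab: "c < V \<Longrightarrow> rm s (addr (j - 1) b c) = G e (j - 1) b c"
    and post: "\<And>t n. (\<And>i. i \<notin> {11,12,13,14,16,18,19,22,23,26} \<Longrightarrow> nr t i = nr s i) \<Longrightarrow>
       rr t 8 = candG e j a b c \<Longrightarrow> (\<And>i. i \<notin> {2,3,4,5,6,8} \<Longrightarrow> rr t i = rr s i) \<Longrightarrow>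
       nm t = nm s \<Longrightarrow> rm t = rm s \<Longrightarrow> obuy t = obuy s \<Longrightarrow> oanc t = oanc s \<Longrightarrow>
       n \<le> 9 * V + 6 * kk e V + 80 \<Longrightarrow> Q t n"
  shows "spec e CAND s Q"
proof -
  have b1: "1 \<le> b" using rng by simp
  have kbc: "kk e b < kk e c" using kk_less_iff rng b1 by simp
  have kcV: "kk e c \<le> kk e V" using kk_le_iff rng b1 by simp
  have bs': "nr s 0 = V" "nr s 1 = K" "nr s 3 = 1" "nr s 4 = V + 1"
     "nr s 5 = (V + 1) * (V + 1)" "nr s 21 = kk e V" "rr s 0 = pr" using bs unfolding base_def by auto
  show ?thesis
  proof (cases "c = V")
    case True
    show ?thesis
      unfolding CAND_def spec_seq_eq
      apply (insert bs' regs)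
      apply (rule KK_spec, simp)
      apply simp
      apply (rule PT_spec, simp, simp, simp, simp)
      apply simp
      apply (rule SEG_spec)
        apply simp
       apply (simp add: kbc)
      apply (simp add: True)
      apply (rule PT_spec, simp, simp, simp, simp)
      apply simp
      apply (rule post)
      using diff_le_self[of "kk e V" "kk e b"]
      apply (simp_all add: candG_def ptk_def seg_def True)
      done
  next
    case False
    have cV: "c < V" using False rng by simp
    have tab': "rm s (addr (j - 1) b c) = G e (j - 1) b c" using tab cV by simp
    have cle: "c - Suc 0 \<le> V" "j - Suc 0 \<le> V" using rng by auto
    show ?thesis
      unfolding CAND_def spec_seq_eq
      apply (insert bs' regs tab' cle)
      apply (rule KK_spec, simp)
      apply simp
      apply (rule PT_spec, simp, simp, simp, simp)
      apply simp
      apply (rule SEG_spec)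
        apply simp
       apply (simp add: kbc)
      apply (simp add: False)
      apply (rule ADDR_spec, simp, simp, simp)
      apply simp
      apply (rule post)
      using diff_le_self[of "kk e c" "kk e b"] kcV rng
      apply (simp_all add: candG_def ptk_def seg_def False addr_def)
      done
  qed
qed

end


declare G.simps(2)[simp del]

definition CBODY :: cmd where
  "CBODY = Seq CAND (Seq (If (RLe 1 8) Skip (Seq (RCOPY 1 8) (COPY 17 9))) (NAdd 9 9 3))"

definition CLOOP :: cmd where
  "CLOOP = Seq (COPY 9 7) (Seq (NAdd 9 9 3) (While (NLess 9 0) CBODY))"

definition CELL :: cmd where
  "CELL = Seq (KK 10 7) (Seq (COPY 9 0) (Seq CAND (Seq (RCOPY 1 8) (Seq (COPY 17 0)
     (Seq (If (NLess 3 6) CLOOP Skip) (Seq (ADDR 6 8 7) (Seq (RStore 13 1) (NStore 13 17))))))))"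

abbreviation "CN \<equiv> {9::nat,17,11,12,13,14,16,18,19,22,23,26}"
abbreviation "CR \<equiv> {1::nat,2,3,4,5,6,8}"

lemma tb_mono: "n \<le> Suc (m * X) \<Longrightarrow> m \<le> M \<Longrightarrow> n \<le> Suc (M * X)" for n m X M :: nat
  by (meson le_trans mult_le_mono1 Suc_le_mono)

context alg
begin

lemma CLOOP_spec:
  assumes bs: "base s"
    and regs: "nr s 6 = j" "nr s 8 = a" "nr s 7 = b" "nr s 10 = kk e b"
    and rng: "1 \<le> a" "a \<le> b" "b < V" "2 \<le> j" "j \<le> V"
    and tab: "\<And>c. b < c \<Longrightarrow> c < V \<Longrightarrow> rm s (addr (j - 1) b c) = G e (j - 1) b c"
    and init: "rr s 1 = candG e j a b V" "nr s 17 = V"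
    and post: "\<And>t n. (\<And>i. i \<notin> CN \<Longrightarrow> nr t i = nr s i) \<Longrightarrow> (\<And>i. i \<notin> CR \<Longrightarrow> rr t i = rr s i) \<Longrightarrow>
       nm t = nm s \<Longrightarrow> rm t = rm s \<Longrightarrow> obuy t = obuy s \<Longrightarrow> oanc t = oanc s \<Longrightarrow>
       rr t 1 = G e j a b \<Longrightarrow> candG e j a b (nr t 17) = G e j a b \<Longrightarrow> nr t 17 \<in> allowed e j b \<Longrightarrow>
       n \<le> V * (9 * V + 6 * kk e V + 88) + 4 \<Longrightarrow> Q t n"
  shows "spec e CLOOP s Q"
proof -
  have bs': "nr s 0 = V" "nr s 3 = 1" using bs unfolding base_def by auto
  define A where "A c = insert V {b<..<c}" for c
  have A_Suc: "A (Suc c) = insert c (A c)" if "b < c" for c using that unfolding A_def by auto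
  have AV: "A V = allowed e j b" unfolding A_def allowed_def using rng by auto
  have GV: "G e j a b = x" if "x = candG e j a b c0" "c0 \<in> allowed e j b"
     "\<forall>c'\<in>allowed e j b. x \<le> candG e j a b c'" for x c0
  proof -
    have "Min (candG e j a b ` allowed e j b) = x"
      by (rule Min_eqI) (use that allowed_fin in auto)
    then show ?thesis using G_eq rng by simp
  qed
  define I where "I t \<longleftrightarrow> (\<exists>c. b < c \<and> c \<le> V \<and> nr t 9 = c \<and>
      (\<forall>i. i \<notin> CN \<longrightarrow> nr t i = nr s i) \<and> (\<forall>i. i \<notin> CR \<longrightarrow> rr t i = rr s i) \<and>
      nm t = nm s \<and> rm t = rm s \<and> obuy t = obuy s \<and> oanc t = oanc s \<and>
      nr t 17 \<in> A c \<and> rr t 1 = candG e j a b (nr t 17) \<and> (\<forall>c'\<in>A c. rr t 1 \<le> candG e j a b c'))" for t :: st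
  have baseI: "base t" if "\<forall>i. i \<notin> CN \<longrightarrow> nr t i = nr s i" "\<forall>i. i \<notin> CR \<longrightarrow> rr t i = rr s i" for t
    using bs that unfolding base_def by simp
  show ?thesis
    unfolding CLOOP_def spec_seq_eq
    apply (simp add: bs')
    apply (rule spec_while[where I = I and \<mu> = "\<lambda>t. V - nr t 9" and T = "9 * V + 6 * kk e V + 87"])
    subgoal unfolding I_def A_def using init rng bs' regs by (intro exI[of _ "Suc b"]) auto
    subgoal for t
      unfolding I_def
      apply (elim exE conjE)
      subgoal for c
        apply (simp add: CBODY_def)
        apply (rule CAND_spec[where j = j and a = a and b = b and c = c])
        apply (rule baseI; simp)
        using regs rng apply simp_all
        using tab apply simp
        apply (simp add: bs')
        apply (auto simp: A_Suc)
        done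
      done
    subgoal for t n
      unfolding I_def
      apply (elim exE conjE)
      subgoal for c
        apply (rule post)
        apply (simp_all add: bs')
        subgoal using AV GV[OF refl, of "nr t 17"] by simp
        subgoal using AV GV[OF refl, of "nr t 17"] by simp
        subgoal using AV by simp
        subgoal premises p
        proof -
          have "n \<le> Suc (V * (88 + (9 * V + 6 * kk e V)))"
            by (rule tb_mono[of n "V - Suc b"]) (use p regs in simp_all)
          then show ?thesis by (metis add.commute)
        qed
        done
      done
    done
qed

lemma base_frame: "base s \<Longrightarrow> (\<And>i. i \<in> {0,1,3,4,5,21} \<Longrightarrow> nr t i = nr s i) \<Longrightarrow> rr t 0 = rr s 0 \<Longrightarrow> base t"
  unfolding base_def by (metis insertCI)

lemma G1: "b < V \<Longrightarrow> G e (Suc 0) a b = candG e (Suc 0) a b V"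
proof -
  assume "b < V"
  then have "allowed e 1 b = {V}" unfolding allowed_def by auto
  then show ?thesis using G_eq[of 1] by simp
qed

lemma CELL_spec:
  assumes bs: "base s"
    and regs: "nr s 6 = j" "nr s 8 = a" "nr s 7 = b"
    and rng: "1 \<le> a" "a \<le> b" "b < V" "1 \<le> j" "j \<le> V"
    and tab: "\<And>c. 2 \<le> j \<Longrightarrow> b < c \<Longrightarrow> c < V \<Longrightarrow> rm s (addr (j - 1) b c) = G e (j - 1) b c"
    and post: "\<And>t n. (\<And>i. i \<notin> insert 10 CN \<Longrightarrow> nr t i = nr s i) \<Longrightarrow> (\<And>i. i \<notin> CR \<Longrightarrow> rr t i = rr s i) \<Longrightarrow>
       rm t = (rm s)(addr j a b := G e j a b) \<Longrightarrow>
       (\<And>x. x \<noteq> addr j a b \<Longrightarrow> nm t x = nm s x) \<Longrightarrow>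
       nm t (addr j a b) \<in> allowed e j b \<Longrightarrow> candG e j a b (nm t (addr j a b)) = G e j a b \<Longrightarrow>
       obuy t = obuy s \<Longrightarrow> oanc t = oanc s \<Longrightarrow>
       n \<le> V * (9 * V + 6 * kk e V + 88) + 20 * V + 6 * kk e V + 130 \<Longrightarrow> Q t n"
  shows "spec e CELL s Q"
proof -
  have bs': "nr s 0 = V" "nr s 1 = K" "nr s 3 = 1" "nr s 4 = V + 1"
     "nr s 5 = (V + 1) * (V + 1)" "nr s 21 = kk e V" "rr s 0 = pr" using bs unfolding base_def by auto
  have bV: "b - Suc 0 \<le> V" using rng by simp
  show ?thesis
  proof (cases "j = 1")
    case True
    show ?thesis
      unfolding CELL_def spec_seq_eq
      apply (insert bs' regs bV rng True)
      apply (rule KK_spec, simp)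
      apply simp
      apply (rule CAND_spec[where j = j and a = a and b = b and c = V])
      apply (rule base_frame[OF bs]; force)
      apply simp_all
      apply (rule ADDR_spec, simp, simp, simp)
      apply simp
      apply (rule post)
      apply (simp_all add: addr_def G1 allowed_def)
      done
  next
    case False
    then have j2: "2 \<le> j" using rng by simp
    show ?thesis
      unfolding CELL_def spec_seq_eq
      apply (insert bs' regs bV rng j2)
      apply (rule KK_spec, simp)
      apply simp
      apply (rule CAND_spec[where j = j and a = a and b = b and c = V])
      apply (rule base_frame[OF bs]; force)
      apply simp_all
      apply (rule CLOOP_spec[where j = j and a = a and b = b])
      apply (rule base_frame[OF bs]; force)
      apply simp_all
      using tab apply simp
      apply (rule ADDR_spec, simp, simp, simp)
      apply simp
      apply (rule post)
      apply (simp_all add: addr_def)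
      done
  qed
qed

end


definition ALOOP :: cmd where "ALOOP = While (NLess 8 25) (Seq CELL (NAdd 8 8 3))"

definition BLOOP :: cmd where
  "BLOOP = While (NLess 7 0) (Seq (NConst 8 1) (Seq (NAdd 25 7 3) (Seq ALOOP (NAdd 7 7 3))))"

definition JLOOP :: cmd where
  "JLOOP = While (NLess 6 24) (Seq (NConst 7 1) (Seq BLOOP (NAdd 6 6 3)))"

abbreviation "BN \<equiv> insert 7 (insert 25 (insert 8 (insert 10 CN)))"

context alg
begin

definition valid :: "nat \<Rightarrow> nat \<Rightarrow> nat \<Rightarrow> bool" where
  "valid j a b \<longleftrightarrow> 1 \<le> j \<and> 1 \<le> a \<and> a \<le> b \<and> b < V"

definition TabOK :: "(nat \<Rightarrow> real) \<Rightarrow> (nat \<Rightarrow> nat) \<Rightarrow> nat \<Rightarrow> nat \<Rightarrow> nat \<Rightarrow> bool" where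
  "TabOK rmm nmm j a b \<longleftrightarrow> rmm (addr j a b) = G e j a b \<and> nmm (addr j a b) \<in> allowed e j b \<and>
     candG e j a b (nmm (addr j a b)) = G e j a b"

definition Tab :: "(nat \<Rightarrow> real) \<Rightarrow> (nat \<Rightarrow> nat) \<Rightarrow> nat \<Rightarrow> nat \<Rightarrow> nat \<Rightarrow> bool" where
  "Tab rmm nmm j b a \<longleftrightarrow> (\<forall>j' a' b'. valid j' a' b' \<and>
      (j' < j \<or> (j' = j \<and> b' < b) \<or> (j' = j \<and> b' = b \<and> a' < a)) \<longrightarrow> TabOK rmm nmm j' a' b')"

lemma addr_inj:
  assumes "valid j a b" "valid j' a' b'" "addr j a b = addr j' a' b'"
  shows "j = j' \<and> a = a' \<and> b = b'"
proof -
  define W where "W = V + 1"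
  have lt: "a < W" "b < W" "a' < W" "b' < W" using assms(1,2) unfolding valid_def W_def by auto
  have eq: "W * (W * j + a) + b = W * (W * j' + a') + b'"
    using assms(3) unfolding addr_def W_def by (simp add: algebra_simps)
  have "(W * (W * j + a) + b) mod W = b" using lt by simp
  moreover have "(W * (W * j' + a') + b') mod W = b'" using lt by simp
  ultimately have bb: "b = b'" using eq by simp
  have "(W * (W * j + a) + b) div W = W * j + a" using lt by simp
  moreover have "(W * (W * j' + a') + b') div W = W * j' + a'" using lt by simp
  ultimately have e2: "W * j + a = W * j' + a'" using eq by simp
  have "(W * j + a) mod W = a" "(W * j' + a') mod W = a'" using lt by simp_all
  then have aa: "a = a'" using e2 by simp
  have "(W * j + a) div W = j" "(W * j' + a') div W = j'" using lt by simp_all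
  then have "j = j'" using e2 by simp
  then show ?thesis using aa bb by simp
qed

lemma tab_step:
  assumes T: "Tab rmm nmm j b a" and v: "valid j a b"
    and r: "rmm' = rmm(addr j a b := G e j a b)"
    and n: "\<And>x. x \<noteq> addr j a b \<Longrightarrow> nmm' x = nmm x"
    and n1: "nmm' (addr j a b) \<in> allowed e j b" and n2: "candG e j a b (nmm' (addr j a b)) = G e j a b"
  shows "Tab rmm' nmm' j b (Suc a)"
  unfolding Tab_def
proof (intro allI impI)
  fix j' a' b' assume h: "valid j' a' b' \<and> (j' < j \<or> (j' = j \<and> b' < b) \<or> (j' = j \<and> b' = b \<and> a' < Suc a))"
  show "TabOK rmm' nmm' j' a' b'"
  proof (cases "j' = j \<and> a' = a \<and> b' = b")
    case True
    then show ?thesis unfolding TabOK_def using r n1 n2 by simp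
  next
    case False
    then have ne: "addr j' a' b' \<noteq> addr j a b" using addr_inj v h by blast
    have "TabOK rmm nmm j' a' b'" using T h False unfolding Tab_def by (metis less_SucE)
    then show ?thesis unfolding TabOK_def using r n ne by simp
  qed
qed

lemma tab_a_end: assumes "Tab r n j b (Suc b)" shows "Tab r n j (Suc b) 1"
  unfolding Tab_def
proof (intro allI impI)
  fix j' a' b' assume h: "valid j' a' b' \<and> (j' < j \<or> j' = j \<and> b' < Suc b \<or> j' = j \<and> b' = Suc b \<and> a' < 1)"
  then have "j' < j \<or> (j' = j \<and> b' < b) \<or> (j' = j \<and> b' = b \<and> a' < Suc b)"
    unfolding valid_def by auto
  then show "TabOK r n j' a' b'" using assms h unfolding Tab_def by blast
qed

lemma tab_b_end: assumes "Tab r n j V 1" shows "Tab r n (Suc j) 1 1"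
  unfolding Tab_def
proof (intro allI impI)
  fix j' a' b' assume h: "valid j' a' b' \<and> (j' < Suc j \<or> j' = Suc j \<and> b' < 1 \<or> j' = Suc j \<and> b' = 1 \<and> a' < 1)"
  then have "j' < j \<or> (j' = j \<and> b' < V)"
    unfolding valid_def by auto
  then show "TabOK r n j' a' b'" using assms h unfolding Tab_def by blast
qed

lemma tab_b_end': "Tab r n j V (Suc 0) \<Longrightarrow> Tab r n (Suc j) (Suc 0) (Suc 0)"
  using tab_b_end by simp

lemma tab_start: "Tab r n 1 1 1"
  unfolding Tab_def valid_def by auto

lemma tab_final: "Tab r n (Suc J') 1 1 \<Longrightarrow> valid j a b \<Longrightarrow> j \<le> J' \<Longrightarrow> TabOK r n j a b"
  unfolding Tab_def by auto

lemma tab_prev: assumes "Tab r n j b a" "2 \<le> j" "1 \<le> b" "b < c" "c < V"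
  shows "r (addr (j - 1) b c) = G e (j - 1) b c"
proof -
  have "valid (j - 1) b c" unfolding valid_def using assms by auto
  moreover have "j - 1 < j" using assms by simp
  ultimately have "TabOK r n (j - 1) b c" using assms(1) unfolding Tab_def by blast
  then show ?thesis unfolding TabOK_def by simp
qed

abbreviation "TC \<equiv> V * (9 * V + 6 * kk e V + 88) + 20 * V + 6 * kk e V + 130"

lemma ALOOP_spec:
  assumes bs: "base s"
    and regs: "nr s 6 = j" "nr s 7 = b" "nr s 25 = Suc b" "nr s 8 = 1"
    and rng: "1 \<le> j" "j \<le> V" "1 \<le> b" "b < V"
    and T: "Tab (rm s) (nm s) j b 1"
    and post: "\<And>t n. (\<And>i. i \<notin> insert 8 (insert 10 CN) \<Longrightarrow> nr t i = nr s i) \<Longrightarrow>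
       (\<And>i. i \<notin> CR \<Longrightarrow> rr t i = rr s i) \<Longrightarrow> obuy t = obuy s \<Longrightarrow> oanc t = oanc s \<Longrightarrow>
       Tab (rm t) (nm t) j b (Suc b) \<Longrightarrow> n \<le> V * (TC + 2) + 1 \<Longrightarrow> Q t n"
  shows "spec e ALOOP s Q"
proof -
  have bs': "nr s 0 = V" "nr s 3 = 1" using bs unfolding base_def by auto
  define I where "I t \<longleftrightarrow> (\<exists>a. 1 \<le> a \<and> a \<le> Suc b \<and> nr t 8 = a \<and>
      (\<forall>i. i \<notin> insert 8 (insert 10 CN) \<longrightarrow> nr t i = nr s i) \<and> (\<forall>i. i \<notin> CR \<longrightarrow> rr t i = rr s i) \<and>
      obuy t = obuy s \<and> oanc t = oanc s \<and> Tab (rm t) (nm t) j b a)" for t :: st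
  show ?thesis
    unfolding ALOOP_def
    apply (rule spec_while[where I = I and \<mu> = "\<lambda>t. Suc b - nr t 8" and T = "TC + 1"])
    subgoal unfolding I_def using regs T rng by auto
    subgoal for t
      unfolding I_def
      apply (elim exE conjE)
      subgoal for a
        apply (simp)
        apply (rule CELL_spec[where j = j and a = a and b = b])
        apply (rule base_frame[OF bs]; force)
        using regs rng apply simp_all
        subgoal for c using tab_prev[of "rm t" "nm t" j b a c] rng by simp
        apply (simp add: bs')
        subgoal premises p for t' n'
        proof -
          have v: "valid j a b" unfolding valid_def using p rng by simp
          have "Tab (rm t') (nm t') j b (Suc a)"
            by (rule tab_step[OF _ v]) (use p in simp_all)
          then show ?thesis using p by auto
        qed
        done
      done
    subgoal for t n
      unfolding I_def
      apply (elim exE conjE)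
      subgoal for a
        apply (rule post)
        apply (simp_all add: bs' regs)
        subgoal premises p
        proof -
          have "n \<le> Suc (V * (TC + 2))"
            by (rule tb_mono[of n "Suc b - nr s 8"]) (use p regs rng in simp_all)
          then show ?thesis by simp
        qed
        done
      done
    done
qed

abbreviation "TA \<equiv> V * (TC + 2) + 1"
abbreviation "TB \<equiv> V * (TA + 4) + 1"

lemma BLOOP_spec:
  assumes bs: "base s"
    and regs: "nr s 6 = j" "nr s 7 = 1"
    and rng: "1 \<le> j" "j \<le> V"
    and T: "Tab (rm s) (nm s) j 1 1"
    and post: "\<And>t n. (\<And>i. i \<notin> BN \<Longrightarrow> nr t i = nr s i) \<Longrightarrow>
       (\<And>i. i \<notin> CR \<Longrightarrow> rr t i = rr s i) \<Longrightarrow> obuy t = obuy s \<Longrightarrow> oanc t = oanc s \<Longrightarrow>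
       Tab (rm t) (nm t) (Suc j) 1 1 \<Longrightarrow> n \<le> TB \<Longrightarrow> Q t n"
  shows "spec e BLOOP s Q"
proof -
  have bs': "nr s 0 = V" "nr s 3 = 1" using bs unfolding base_def by auto
  define I where "I t \<longleftrightarrow> (\<exists>b. 1 \<le> b \<and> b \<le> V \<and> nr t 7 = b \<and>
      (\<forall>i. i \<notin> BN \<longrightarrow> nr t i = nr s i) \<and> (\<forall>i. i \<notin> CR \<longrightarrow> rr t i = rr s i) \<and>
      obuy t = obuy s \<and> oanc t = oanc s \<and> Tab (rm t) (nm t) j b 1)" for t :: st
  show ?thesis
    unfolding BLOOP_def
    apply (rule spec_while[where I = I and \<mu> = "\<lambda>t. V - nr t 7" and T = "TA + 3"])
    subgoal unfolding I_def using regs T rng V2 by auto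
    subgoal for t
      unfolding I_def
      apply (elim exE conjE)
      subgoal for b
        apply (simp add: bs')
        apply (rule ALOOP_spec[where j = j and b = b])
        apply (rule base_frame[OF bs]; force)
        using regs rng apply simp_all
        subgoal premises p for t' n'
        proof -
          have "Tab (rm t') (nm t') j (Suc b) 1" by (rule tab_a_end) (use p in simp)
          then show ?thesis using p bs' by auto
        qed
        done
      done
    subgoal for t n
      unfolding I_def
      apply (elim exE conjE)
      subgoal for b
        apply (rule post)
        apply (simp_all add: bs' regs)
        apply (simp add: tab_b_end')
        subgoal premises p
        proof -
          have "n \<le> Suc (V * (TA + 3 + 1))"
            by (rule tb_mono[of n "V - nr s 7"]) (use p regs rng in simp_all)
          then show ?thesis by simp
        qed
        done
      done
    done
qed

lemma JLOOP_spec: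
  assumes bs: "base s"
    and regs: "nr s 6 = 1" "nr s 24 = Suc J'"
    and rng: "J' < V"
    and post: "\<And>t n. (\<And>i. i \<notin> insert 6 BN \<Longrightarrow> nr t i = nr s i) \<Longrightarrow>
       (\<And>i. i \<notin> CR \<Longrightarrow> rr t i = rr s i) \<Longrightarrow> obuy t = obuy s \<Longrightarrow> oanc t = oanc s \<Longrightarrow>
       Tab (rm t) (nm t) (Suc J') 1 1 \<Longrightarrow> n \<le> V * (TB + 3) + 1 \<Longrightarrow> Q t n"
  shows "spec e JLOOP s Q"
proof -
  have bs': "nr s 0 = V" "nr s 3 = 1" using bs unfolding base_def by auto
  define I where "I t \<longleftrightarrow> (\<exists>j. 1 \<le> j \<and> j \<le> Suc J' \<and> nr t 6 = j \<and>
      (\<forall>i. i \<notin> insert 6 BN \<longrightarrow> nr t i = nr s i) \<and> (\<forall>i. i \<notin> CR \<longrightarrow> rr t i = rr s i) \<and>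
      obuy t = obuy s \<and> oanc t = oanc s \<and> Tab (rm t) (nm t) j 1 1)" for t :: st
  show ?thesis
    unfolding JLOOP_def
    apply (rule spec_while[where I = I and \<mu> = "\<lambda>t. Suc J' - nr t 6" and T = "TB + 2"])
    subgoal unfolding I_def using regs tab_start by auto
    subgoal for t
      unfolding I_def
      apply (elim exE conjE)
      subgoal for j
        apply (simp add: bs')
        apply (rule BLOOP_spec[where j = j])
        apply (rule base_frame[OF bs]; force)
        using regs rng apply simp_all
        apply (auto simp: bs')
        done
      done
    subgoal for t n
      unfolding I_def
      apply (elim exE conjE)
      subgoal for j
        apply (rule post)
        apply (simp_all add: bs' regs)
        subgoal premises p
        proof -
          have "n \<le> Suc (V * (TB + 2 + 1))"
            by (rule tb_mono[of n "Suc J' - nr s 6"]) (use p regs rng in simp_all)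
          then show ?thesis by (simp add: algebra_simps)
        qed
        done
      done
    done
qed

end


definition ANCLOOP :: cmd where
  "ANCLOOP = While (NLess 12 11) (Seq (OutAnc 12 7 9) (NAdd 12 12 3))"

lemma ANCLOOP_spec:
  assumes one: "nr s 3 = 1" and k0: "nr s 12 \<le> nr s 11"
    and post: "\<And>t n. nr t = (nr s)(12 := nr s 11) \<Longrightarrow>
       oanc t = (\<lambda>k. if nr s 12 \<le> k \<and> k < nr s 11 then (nr s 7, nr s 9) else oanc s k) \<Longrightarrow>
       rr t = rr s \<Longrightarrow> nm t = nm s \<Longrightarrow> rm t = rm s \<Longrightarrow> obuy t = obuy s \<Longrightarrow>
       n \<le> 3 * (nr s 11 - nr s 12) + 1 \<Longrightarrow> Q t n"
  shows "spec e ANCLOOP s Q"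
proof -
  define I where "I t \<longleftrightarrow> (\<exists>i. nr s 12 \<le> i \<and> i \<le> nr s 11 \<and> nr t = (nr s)(12 := i) \<and>
      oanc t = (\<lambda>k. if nr s 12 \<le> k \<and> k < i then (nr s 7, nr s 9) else oanc s k) \<and>
      rr t = rr s \<and> nm t = nm s \<and> rm t = rm s \<and> obuy t = obuy s)" for t :: st
  show ?thesis
    unfolding ANCLOOP_def
    apply (rule spec_while[where I = I and \<mu> = "\<lambda>t. nr s 11 - nr t 12" and T = 2])
    subgoal unfolding I_def using k0 by (intro exI[of _ "nr s 12"]) (auto simp: fun_eq_iff)
    subgoal for t
      unfolding I_def
      apply (elim exE conjE)
      subgoal for i
        apply (simp add: one)
        apply (rule conjI)
         apply (rule exI[of _ "Suc i"])
         apply (auto simp: fun_eq_iff)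
        done
      done
    subgoal for t n
      unfolding I_def
      apply (elim exE conjE)
      subgoal for i
        apply (rule post)
        apply (auto simp: fun_eq_iff)
        done
      done
    done
qed

definition RBODY :: cmd where
  "RBODY = Seq (ADDR 6 8 7) (Seq (NLoad 9 13) (Seq (KK 11 9) (Seq (PT 8 7 9 10) (Seq (OutAnc 10 22 23)
     (Seq (COPY 12 10) (Seq (NAdd 12 12 3) (Seq ANCLOOP (Seq (OutBuy 9) (Seq (COPY 8 7) (Seq (COPY 7 9)
     (Seq (COPY 10 11) (NSub 6 6 3))))))))))))"

definition REC :: cmd where
  "REC = Seq (OutBuy 3) (Seq (COPY 6 2) (Seq (NConst 8 1) (Seq (NConst 7 1) (Seq (NConst 10 0)
     (Seq (While (NLess 7 0) RBODY) (Seq (PT 8 7 7 10) (OutAnc 10 22 23)))))))"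

abbreviation "RN \<equiv> {6::nat,7,8,9,10,11,12,13,14,16,18,19,22,23}"

context alg
begin

lemma RBODY_spec:
  assumes bs: "base s"
    and regs: "nr s 6 = j" "nr s 8 = a" "nr s 7 = b" "nr s 10 = kk e b"
    and rng: "1 \<le> j" "j \<le> V" "1 \<le> a" "a \<le> b" "b < V"
    and cdef: "nm s (addr j a b) = c" and crng: "b < c" "c \<le> V"
    and post: "\<And>t n. nr t 6 = j - 1 \<Longrightarrow> nr t 8 = b \<Longrightarrow> nr t 7 = c \<Longrightarrow> nr t 10 = kk e c \<Longrightarrow>
       (\<And>i. i \<notin> RN \<Longrightarrow> nr t i = nr s i) \<Longrightarrow> (\<And>i. i \<notin> {3,4,5,6} \<Longrightarrow> rr t i = rr s i) \<Longrightarrow>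
       rm t = rm s \<Longrightarrow> nm t = nm s \<Longrightarrow> obuy t = insert c (obuy s) \<Longrightarrow>
       oanc t = (\<lambda>k. if kk e b < k \<and> k < kk e c then (b, c)
                    else if k = kk e b then snd (sel4 e (kk e b) a b c) else oanc s k) \<Longrightarrow>
       n \<le> 9 * V + 3 * kk e V + 61 \<Longrightarrow> Q t n"
  shows "spec e RBODY s Q"
proof -
  have bs': "nr s 0 = V" "nr s 1 = K" "nr s 3 = 1" "nr s 4 = V + 1"
     "nr s 5 = (V + 1) * (V + 1)" "nr s 21 = kk e V" "rr s 0 = pr" using bs unfolding base_def by auto
  have b1: "1 \<le> b" using rng by simp
  have kbc: "kk e b < kk e c" using kk_less_iff b1 crng by simp
  have kcV: "kk e c \<le> kk e V" using kk_le_iff b1 crng by simp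
  have cdef': "nm s (Suc (V + (V + V * V)) * j + Suc V * a + b) = c" using cdef unfolding addr_def by simp
  have cV: "c - Suc 0 \<le> V" using crng by simp
  show ?thesis
    unfolding RBODY_def spec_seq_eq
    apply (insert bs' regs rng cdef' kbc kcV cV)
    apply (rule ADDR_spec, simp, simp, simp)
    apply simp
    apply (rule KK_spec, simp)
    apply simp
    apply (rule PT_spec, simp, simp, simp, simp)
    apply simp
    apply (rule ANCLOOP_spec)
      apply simp
     apply simp
    apply simp
    apply (rule post)
    apply (simp_all)
    apply (auto simp: fun_eq_iff)
    done
qed

end

context alg
begin

definition Rem :: "nat \<Rightarrow> nat \<Rightarrow> nat \<Rightarrow> real" where
  "Rem j a b = (if b < V then G e j a b else ptk e (kk e V) a V V)"

definition cost :: "st \<Rightarrow> nat set \<Rightarrow> real" where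
  "cost t A = (\<Sum>k\<in>A. Qe e k * DDe e k (fst (oanc t k)) (snd (oanc t k)))"

definition ancOK :: "st \<Rightarrow> nat \<Rightarrow> bool" where
  "ancOK t k \<longleftrightarrow> fst (oanc t k) \<in> obuy t \<and> snd (oanc t k) \<in> obuy t \<and>
      kk e (fst (oanc t k)) \<le> k \<and> k \<le> kk e (snd (oanc t k))"

definition RI :: "nat \<Rightarrow> st \<Rightarrow> st \<Rightarrow> bool" where
  "RI J' s t \<longleftrightarrow> (\<exists>j a b. nr t 6 = j \<and> nr t 8 = a \<and> nr t 7 = b \<and> nr t 10 = kk e b \<and>
     (\<forall>i. i \<notin> RN \<longrightarrow> nr t i = nr s i) \<and> (\<forall>i. i \<notin> {3,4,5,6} \<longrightarrow> rr t i = rr s i) \<and>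
     rm t = rm s \<and> nm t = nm s \<and>
     1 \<le> a \<and> a \<le> b \<and> b \<le> V \<and> (b < V \<longrightarrow> 1 \<le> j) \<and> card (obuy t) + j \<le> Suc J' \<and>
     finite (obuy t) \<and> obuy t \<subseteq> {1..b} \<and> a \<in> obuy t \<and> b \<in> obuy t \<and>
     (\<forall>k<kk e b. ancOK t k) \<and>
     cost t {..<kk e b} + pr * card (obuy t) + Rem j a b = pr + G e J' 1 1)"

lemma sum_lt_split:
  fixes f :: "nat \<Rightarrow> real"
  assumes "m < p"
  shows "(\<Sum>k\<in>{..<p}. f k) = (\<Sum>k\<in>{..<m}. f k) + f m + (\<Sum>k\<in>{m<..<p}. f k)"
proof -
  have e: "{..<p} = insert m ({..<m} \<union> {m<..<p})" using assms by auto
  have d: "{..<m} \<inter> {m<..<p} = {}" by auto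
  have "(\<Sum>k\<in>{..<p}. f k) = f m + (\<Sum>k\<in>{..<m} \<union> {m<..<p}. f k)" unfolding e by simp
  also have "\<dots> = f m + ((\<Sum>k\<in>{..<m}. f k) + (\<Sum>k\<in>{m<..<p}. f k))"
    using sum.union_disjoint[OF _ _ d, of f] by simp
  finally show ?thesis by simp
qed

lemma RI_step:
  assumes I: "RI J' s t" and bV: "nr t 7 < nr t 0" and bs: "base s" and T: "Tab (rm s) (nm s) (Suc J') 1 1"
    and JV: "J' < V"
  shows "spec e RBODY t (\<lambda>t' n. RI J' s t' \<and> V - nr t' 7 < V - nr t 7 \<and> n \<le> 9 * V + 3 * kk e V + 61)"
proof -
  obtain j a b where r: "nr t 6 = j" "nr t 8 = a" "nr t 7 = b" "nr t 10 = kk e b"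
    and fr: "\<forall>i. i \<notin> RN \<longrightarrow> nr t i = nr s i" "\<forall>i. i \<notin> {3,4,5,6} \<longrightarrow> rr t i = rr s i"
    and mem: "rm t = rm s" "nm t = nm s"
    and rng: "1 \<le> a" "a \<le> b" "b \<le> V" "b < V \<longrightarrow> 1 \<le> j" "card (obuy t) + j \<le> Suc J'"
    and P: "finite (obuy t)" "obuy t \<subseteq> {1..b}" "a \<in> obuy t" "b \<in> obuy t"
    and anc: "\<forall>k<kk e b. ancOK t k"
    and cst: "cost t {..<kk e b} + pr * card (obuy t) + Rem j a b = pr + G e J' 1 1"
    using I unfolding RI_def by blast
  have bs': "nr s 0 = V" "nr s 3 = 1" using bs unfolding base_def by auto
  have bt: "base t" using bs fr unfolding base_def by simp
  have bV': "b < V" using bV r fr bs' by simp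
  have j1: "1 \<le> j" using rng bV' by simp
  have cP: "card (obuy t) \<ge> 1" using P by (metis One_nat_def Suc_leI card_gt_0_iff empty_iff)
  have jJ: "j \<le> J'" using rng cP by simp
  have v: "valid j a b" unfolding valid_def using j1 rng bV' by simp
  have ok: "TabOK (rm s) (nm s) j a b" by (rule tab_final[OF T v jJ])
  define c where "c = nm s (addr j a b)"
  have cal: "c \<in> allowed e j b" and cG: "candG e j a b c = G e j a b"
    using ok unfolding TabOK_def c_def by auto
  have crng: "b < c" "c \<le> V" "c = V \<or> 2 \<le> j" using cal unfolding allowed_def by auto
  show ?thesis
  proof (rule RBODY_spec[OF bt r(1-4) j1 _ rng(1,2) bV' _ crng(1,2)])
    show "j \<le> V" using jJ JV by simp
    show "nm t (addr j a b) = c" using mem c_def by simp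
    fix t' :: st and n
    assume r': "nr t' 6 = j - 1" "nr t' 8 = b" "nr t' 7 = c" "nr t' 10 = kk e c"
      and fr': "\<And>i. i \<notin> RN \<Longrightarrow> nr t' i = nr t i" "\<And>i. i \<notin> {3,4,5,6} \<Longrightarrow> rr t' i = rr t i"
      and mem': "rm t' = rm t" "nm t' = nm t"
      and ob: "obuy t' = insert c (obuy t)"
      and oa: "oanc t' = (\<lambda>k. if kk e b < k \<and> k < kk e c then (b, c)
                    else if k = kk e b then snd (sel4 e (kk e b) a b c) else oanc t k)"
      and n: "n \<le> 9 * V + 3 * kk e V + 61"
    have b1: "1 \<le> b" using rng by simp
    have kbc: "kk e b < kk e c" using kk_less_iff b1 crng by simp
    have cnot: "c \<notin> obuy t" using P(2) crng by auto
    have card': "card (obuy t') = Suc (card (obuy t))" using ob P(1) cnot by simp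
    have sub: "obuy t \<subseteq> obuy t'" using ob by auto
    define p where "p = snd (sel4 e (kk e b) a b c)"
    have pin: "p \<in> {(a,b),(a,c),(b,b),(b,c)}" unfolding p_def by (rule sel4_props(5))
    have ancs: "\<forall>k<kk e c. ancOK t' k"
    proof (intro allI impI)
      fix k assume k: "k < kk e c"
      show "ancOK t' k"
      proof (cases "kk e b < k")
        case True
        have o: "oanc t' k = (b, c)" using oa True k by simp
        have "b \<in> obuy t'" "c \<in> obuy t'" using ob P(4) by auto
        then show ?thesis unfolding ancOK_def o using True k by simp
      next
        case False
        show ?thesis
        proof (cases "k = kk e b")
          case True
          have o: "oanc t' k = p" using oa True kbc unfolding p_def by simp
          have f: "fst p \<in> {a, b}" "snd p \<in> {b, c}" using pin by auto
          have ka: "kk e a \<le> kk e b" using kk_le_iff rng by simp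
          have m: "a \<in> obuy t'" "b \<in> obuy t'" "c \<in> obuy t'" using ob P(3,4) by auto
          have "fst p \<in> obuy t'" "kk e (fst p) \<le> k" using f(1) m ka True by auto
          moreover have "snd p \<in> obuy t'" "k \<le> kk e (snd p)" using f(2) m kbc True by auto
          ultimately show ?thesis unfolding ancOK_def o by simp
        next
          case False2: False
          then have "k < kk e b" using False by simp
          then have "ancOK t k" using anc by simp
          moreover have "oanc t' k = oanc t k" using oa False False2 by simp
          ultimately show ?thesis unfolding ancOK_def using sub by auto
        qed
      qed
    qed
    have c1: "cost t' {..<kk e b} = cost t {..<kk e b}"
      unfolding cost_def by (rule sum.cong) (auto simp: oa)
    have c2: "Qe e (kk e b) * DDe e (kk e b) (fst (oanc t' (kk e b))) (snd (oanc t' (kk e b))) = ptk e (kk e b) a b c"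
      using oa sel4_props(6)[of e "kk e b" a b c] unfolding ptk_def by simp
    have c3: "cost t' {kk e b<..<kk e c} = seg e b c"
      unfolding cost_def seg_def by (rule sum.cong) (auto simp: oa)
    have cc: "cost t' {..<kk e c} = cost t {..<kk e b} + ptk e (kk e b) a b c + seg e b c"
      using sum_lt_split[OF kbc, of "\<lambda>k. Qe e k * DDe e k (fst (oanc t' k)) (snd (oanc t' k))"] c1 c2 c3
      unfolding cost_def by simp
    have GR: "G e j a b = ptk e (kk e b) a b c + seg e b c + pr + Rem (j - 1) b c"
      using cG crng unfolding candG_def Rem_def by auto
    have R: "Rem j a b = G e j a b" unfolding Rem_def using bV' by simp
    have cost': "cost t' {..<kk e c} + pr * card (obuy t') + Rem (j - 1) b c = pr + G e J' 1 1"
      using cst cc card' GR R by (simp add: algebra_simps)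
    have F1: "\<forall>i. i \<notin> RN \<longrightarrow> nr t' i = nr s i" using fr' fr by simp
    have F2: "\<forall>i. i \<notin> {3,4,5,6} \<longrightarrow> rr t' i = rr s i" using fr' fr by simp
    have S: "obuy t' \<subseteq> {1..c}" using ob P(2) crng b1 by auto
    have cj: "card (obuy t') + (j - 1) \<le> Suc J'" using card' rng(5) j1 by simp
    have cj2: "c < V \<longrightarrow> 1 \<le> j - 1" using crng by auto
    have fin: "finite (obuy t')" "b \<in> obuy t'" "c \<in> obuy t'" using ob P by auto
    have mm: "rm t' = rm s" "nm t' = nm s" using mem mem' by simp_all
    have "RI J' s t'"
      unfolding RI_def
      apply (rule exI[of _ "j - 1"], rule exI[of _ b], rule exI[of _ c])
      apply (intro conjI)
      by (fact r'(1) r'(2) r'(3) r'(4) F1 F2 mm(1) mm(2) b1 less_imp_le[OF crng(1)] crng(2) cj2 cj fin(1) S fin(2) fin(3) ancs cost')+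
    moreover have "V - nr t' 7 < V - nr t 7" using r' r crng by simp
    ultimately show "RI J' s t' \<and> V - nr t' 7 < V - nr t 7 \<and> n \<le> 9 * V + 3 * kk e V + 61"
      using n by simp
  qed
qed


definition RECOK :: "nat \<Rightarrow> st \<Rightarrow> bool" where
  "RECOK J' t \<longleftrightarrow> finite (obuy t) \<and> obuy t \<subseteq> {1..V} \<and> V \<in> obuy t \<and> card (obuy t) \<le> Suc J' \<and>
     (\<forall>k\<le>kk e V. ancOK t k) \<and> cost t {..kk e V} + pr * card (obuy t) = pr + G e J' 1 1"

lemma REC_fin:
  assumes b: "b = V" and rng: "1 \<le> a" "a \<le> b" "card P + j \<le> Suc J'" and P: "finite P" "P \<subseteq> {1..b}" "a \<in> P" "b \<in> P"
    and anc: "\<forall>k<kk e b. ancOK t k" and cst: "cost t {..<kk e b} + pr * card P + Rem j a b = pr + G e J' 1 1"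
    and ob: "obuy t = P" "obuy t' = P" and oa: "oanc t' = (oanc t)(kk e V := snd (sel4 e (kk e V) a V V))"
  shows "RECOK J' t'"
proof -
  have ancs: "\<forall>k\<le>kk e V. ancOK t' k"
  proof (intro allI impI)
    fix k assume k: "k \<le> kk e V"
    show "ancOK t' k"
    proof (cases "k = kk e V")
      case True
      define p where "p = snd (sel4 e (kk e V) a V V)"
      have pin: "p \<in> {(a,V),(a,V),(V,V),(V,V)}" unfolding p_def by (rule sel4_props(5))
      have o: "oanc t' k = p" using oa True unfolding p_def by simp
      have ka: "kk e a \<le> kk e V" using kk_le_iff rng b by simp
      show ?thesis unfolding ancOK_def o using pin ka P ob b True by auto
    next
      case False
      then have "k < kk e b" using k b by simp
      then have "ancOK t k" using anc by simp
      moreover have "oanc t' k = oanc t k" using oa False by simp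
      ultimately show ?thesis unfolding ancOK_def using ob by simp
    qed
  qed
  have c1: "cost t' {..<kk e V} = cost t {..<kk e V}"
    unfolding cost_def by (rule sum.cong) (auto simp: oa)
  have c2: "Qe e (kk e V) * DDe e (kk e V) (fst (oanc t' (kk e V))) (snd (oanc t' (kk e V))) = ptk e (kk e V) a V V"
    using oa sel4_props(6)[of e "kk e V" a V V] unfolding ptk_def by simp
  have "cost t' {..kk e V} = cost t' {..<kk e V} + Qe e (kk e V) * DDe e (kk e V) (fst (oanc t' (kk e V))) (snd (oanc t' (kk e V)))"
    unfolding cost_def lessThan_Suc_atMost[symmetric] by simp
  then have cc: "cost t' {..kk e V} = cost t {..<kk e V} + ptk e (kk e V) a V V" using c1 c2 by simp
  have R: "Rem j a b = ptk e (kk e V) a V V" unfolding Rem_def using b by simp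
  show ?thesis unfolding RECOK_def
    using P ob b rng ancs cc cst R by auto
qed

lemma REC_spec:
  assumes bs: "base s" and J: "nr s 2 = J'" "1 \<le> J'" "J' < V"
    and T: "Tab (rm s) (nm s) (Suc J') 1 1" and ob0: "obuy s = {}"
    and post: "\<And>t n. RECOK J' t \<Longrightarrow> n \<le> V * (9 * V + 3 * kk e V + 62) + 50 \<Longrightarrow> Q t n"
  shows "spec e REC s Q"
proof -
  have bs': "nr s 0 = V" "nr s 3 = 1" using bs unfolding base_def by auto
  show ?thesis
    unfolding REC_def spec_seq_eq
    apply (simp add: bs' J(1) ob0)
    apply (rule spec_while[where I = "RI J' s" and \<mu> = "\<lambda>t. V - nr t 7" and T = "9 * V + 3 * kk e V + 61"])
    subgoal
      unfolding RI_def
      apply (rule exI[of _ J'], rule exI[of _ 1], rule exI[of _ 1])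
      using J V2 by (simp add: kk_def cost_def Rem_def)
    subgoal for t by (rule RI_step[OF _ _ bs T J(3)]) simp_all
    subgoal for t n
      unfolding RI_def
      apply (elim exE conjE)
      subgoal for j a b
        apply (simp)
        apply (rule PT_spec, simp, simp, simp, simp)
        apply (rule post)
        subgoal by (rule REC_fin[where b = b and a = a and j = j and P = "obuy t" and t = t]) (auto simp: bs')
        subgoal premises p
        proof -
          have "n \<le> Suc (V * (62 + (9 * V + 3 * kk e V)))"
            by (rule tb_mono[of n "V - Suc 0"]) (use p in simp_all)
          then show ?thesis using p by (simp add: algebra_simps)
        qed
        done
      done
    done
qed

end


context alg
begin

definition JJ :: nat where "JJ = min cap V - 1"

definition kidx :: "real \<Rightarrow> nat" where "kidx u = inv_into {0..kk e V} (vu K) u"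

lemma virt_eq: "virt_views V K = vu K ` {..kk e V}"
  unfolding virt_views_def kk_def by (simp add: atLeast0AtMost)

lemma kidx_vu: "k \<le> kk e V \<Longrightarrow> kidx (vu K k) = k"
  unfolding kidx_def by (rule inv_into_f_f[OF vu_inj]) simp

lemma dist_reindex:
  "distortion V K (eQ e) (eD e) l r = (\<Sum>k\<in>{..kk e V}. Qe e k * DDe e k (l (vu K k)) (r (vu K k)))"
  unfolding distortion_def virt_eq Qe_def DDe_def
  by (subst sum.reindex[OF vu_inj]) simp

lemma opt_from_RECOK:
  assumes R: "RECOK JJ t"
  defines "l \<equiv> \<lambda>u. fst (oanc t (kidx u))" and "r \<equiv> \<lambda>u. snd (oanc t (kidx u))"
  shows "anchors_of V K t l r" "feasible V K (obuy t) l r" "card (obuy t) \<le> cap"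
    "\<And>S' l' r'. feasible V K S' l' r' \<Longrightarrow> card S' \<le> cap \<Longrightarrow>
       distortion V K (eQ e) (eD e) l r + pr * card (obuy t) \<le> distortion V K (eQ e) (eD e) l' r' + pr * card S'"
proof -
  have fin: "finite (obuy t)" and sub: "obuy t \<subseteq> {1..V}" and Vin: "V \<in> obuy t"
    and cd: "card (obuy t) \<le> Suc JJ" and anc: "\<forall>k\<le>kk e V. ancOK t k"
    and cst: "cost t {..kk e V} + pr * card (obuy t) = pr + G e JJ 1 1"
    using R unfolding RECOK_def by auto
  show "anchors_of V K t l r" unfolding anchors_of_def l_def r_def kk_def[symmetric]
    using kidx_vu by simp
  have "\<forall>u\<in>virt_views V K. l u \<in> obuy t \<and> r u \<in> obuy t \<and> real (l u) \<le> u \<and> u \<le> real (r u)"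
  proof
    fix u assume "u \<in> virt_views V K"
    then obtain k where k: "k \<le> kk e V" "u = vu K k" unfolding virt_eq by auto
    have ki: "kidx u = k" using k kidx_vu by simp
    have a: "ancOK t k" using anc k by simp
    then have x1: "1 \<le> fst (oanc t k)" "1 \<le> snd (oanc t k)" using sub unfolding ancOK_def by auto
    show "l u \<in> obuy t \<and> r u \<in> obuy t \<and> real (l u) \<le> u \<and> u \<le> real (r u)"
      using a x1 k unfolding ancOK_def l_def r_def by (simp add: vu_ge_iff vu_le_iff kidx_vu)
  qed
  then show "feasible V K (obuy t) l r" unfolding feasible_def using sub by blast
  show "card (obuy t) \<le> cap" using cd cap2 V2 unfolding JJ_def by simp
  fix S' l' r' assume feas: "feasible V K S' l' r'" and cS: "card S' \<le> cap"
  have S'sub: "S' \<subseteq> {1..V}" using feas unfolding feasible_def by simp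
  have S'fin: "finite S'" using S'sub finite_subset by blast
  have fa: "\<And>u. u \<in> virt_views V K \<Longrightarrow> l' u \<in> S' \<and> r' u \<in> S' \<and> real (l' u) \<le> u \<and> u \<le> real (r' u)"
    using feas unfolding feasible_def by blast
  define L where "L k = l' (vu K k)" for k
  define R' where "R' k = r' (vu K k)" for k
  have ancL: "L k \<in> S' \<and> R' k \<in> S' \<and> kk e (L k) \<le> k \<and> k \<le> kk e (R' k)" if k: "k \<le> kk e V" for k
  proof -
    have u: "vu K k \<in> virt_views V K" using vu_in k by simp
    have f: "l' (vu K k) \<in> S'" "r' (vu K k) \<in> S'" "real (l' (vu K k)) \<le> vu K k" "vu K k \<le> real (r' (vu K k))"
      using fa[OF u] by auto
    have 1: "1 \<le> l' (vu K k)" "1 \<le> r' (vu K k)" using f S'sub by auto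
    show ?thesis unfolding L_def R'_def using f 1 by (simp add: vu_ge_iff vu_le_iff)
  qed
  have VS': "V \<in> S'"
  proof -
    have "R' (kk e V) \<in> S'" "kk e V \<le> kk e (R' (kk e V))" using ancL by auto
    moreover have "R' (kk e V) \<le> V" "1 \<le> R' (kk e V)" using calculation(1) S'sub by auto
    ultimately have "R' (kk e V) = V" using kk_le_iff V2 by (metis le_antisym one_le_numeral order_trans)
    then show ?thesis using \<open>R' (kk e V) \<in> S'\<close> by simp
  qed
  have oneS': "1 \<in> S'"
  proof -
    have "L 0 \<in> S'" "kk e (L 0) \<le> 0" using ancL by auto
    moreover have "1 \<le> L 0" using calculation(1) S'sub by auto
    ultimately have "L 0 = 1" using kk_le_iff[of "L 0" 1] kk1 by simp
    then show ?thesis using \<open>L 0 \<in> S'\<close> by simp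
  qed
  have cS'V: "card S' \<le> V" using card_mono[OF _ S'sub] by simp
  have eqS: "S' \<inter> {1<..V} = S' - {1}" using S'sub by auto
  have cardm: "card (S' \<inter> {1<..V}) = card S' - 1" unfolding eqS using oneS' S'fin by simp
  have c1: "1 \<le> card S'" using oneS' S'fin by (metis One_nat_def Suc_leI card_gt_0_iff empty_iff)
  have J1: "1 \<le> JJ" unfolding JJ_def using cap2 V2 by simp
  have "G e JJ 1 1 \<le> (\<Sum>k\<in>{kk e 1..kk e V}. Qe e k * DDe e k (L k) (R' k)) + pr * card (S' \<inter> {1<..V})"
  proof (rule LB[OF S'sub VS' ancL J1 oneS'])
    show "1 < V" using V2 by simp
    show "\<forall>x\<in>S'. x < 1 \<longrightarrow> x \<le> 1 \<and> 1 < 1" using S'sub by auto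
    show "card (S' \<inter> {1<..V}) \<le> JJ" unfolding cardm JJ_def using cS cS'V by simp
  qed simp_all
  also have "(\<Sum>k\<in>{kk e 1..kk e V}. Qe e k * DDe e k (L k) (R' k)) = distortion V K (eQ e) (eD e) l' r'"
    unfolding dist_reindex L_def R'_def kk1 by (simp add: atLeast0AtMost)
  finally have LB': "G e JJ 1 1 \<le> distortion V K (eQ e) (eD e) l' r' + pr * (card S' - 1)"
    using cardm by simp
  have ours: "distortion V K (eQ e) (eD e) l r = cost t {..kk e V}"
    unfolding dist_reindex cost_def l_def r_def by (rule sum.cong) (auto simp: kidx_vu)
  have "real (card S' - 1) = real (card S') - 1" using c1 by (simp add: of_nat_diff)
  then show "distortion V K (eQ e) (eD e) l r + pr * card (obuy t) \<le> distortion V K (eQ e) (eD e) l' r' + pr * card S'"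
    using ours cst LB' by (simp add: algebra_simps)
qed

end


definition SETUP :: "cmd \<Rightarrow> cmd" where
  "SETUP capI = Seq (ReadV 0) (Seq (ReadK 1) (Seq capI (Seq (ReadA 0) (Seq (NConst 3 1) (Seq (NAdd 4 0 3)
     (Seq (COPY 18 4) (Seq (MUL 5 4 18 14 16) (Seq (KK 21 0) (NConst 20 2)))))))))"

definition CASE1 :: cmd where "CASE1 = Seq (OutBuy 3) (Seq (NConst 12 0) (OutAnc 12 3 3))"

definition MAINB :: cmd where
  "MAINB = Seq (If (NLess 0 2) (NSub 2 0 3) (NSub 2 2 3)) (Seq (NAdd 24 2 3) (Seq (NConst 6 1) (Seq JLOOP REC)))"

definition PROG :: "cmd \<Rightarrow> cmd" where
  "PROG capI = Seq (SETUP capI) (If (NEq 0 3) CASE1 (If (NLess 2 20) Skip MAINB))"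

definition TOT :: "nat \<Rightarrow> nat \<Rightarrow> nat" where
  "TOT v kv = 9 * v + 100 + (v * (v * (v * (v * (9 * v + 6 * kv + 88) + 20 * v + 6 * kv + 130 + 2) + 1 + 4) + 1 + 3) + 1) + (v * (9 * v + 3 * kv + 62) + 50)"

lemma TOT_mono: "v \<le> N \<Longrightarrow> kv \<le> N \<Longrightarrow> TOT v kv \<le> TOT N N"
  unfolding TOT_def by (intro add_mono mult_le_mono order_refl) simp_all

context alg
begin

lemma TOT_split: "n \<le> 7 + 3 * V \<Longrightarrow> na \<le> 3 * (V - Suc 0) + 5 \<Longrightarrow> n1 \<le> V * (TB + 3) + 1 \<Longrightarrow>
   n2 \<le> V * (9 * V + 3 * kk e V + 62) + 50 \<Longrightarrow> n + na + (n1 + n2) + 15 \<le> TOT V (kk e V)"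
  unfolding TOT_def by linarith

lemma JR_spec:
  assumes bs: "base s" and r: "nr s 6 = 1" "nr s 24 = Suc J'" "nr s 2 = J'" and J: "1 \<le> J'" "J' < V"
    and ob: "obuy s = {}"
    and post: "\<And>t n1 n2. RECOK J' t \<Longrightarrow> n1 \<le> V * (TB + 3) + 1 \<Longrightarrow>
       n2 \<le> V * (9 * V + 3 * kk e V + 62) + 50 \<Longrightarrow> Q t (n1 + n2)"
  shows "spec e JLOOP s (\<lambda>s1 n1. spec e REC s1 (\<lambda>t n2. Q t (n1 + n2)))"
proof (rule JLOOP_spec[OF bs r(1,2) J(2)])
  fix t :: st and n1
  assume fr: "\<And>i. i \<notin> insert 6 BN \<Longrightarrow> nr t i = nr s i" and fr2: "\<And>i. i \<notin> CR \<Longrightarrow> rr t i = rr s i"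
    and ob': "obuy t = obuy s" and oa': "oanc t = oanc s" and T: "Tab (rm t) (nm t) (Suc J') 1 1"
    and n1: "n1 \<le> V * (TB + 3) + 1"
  have bt: "base t" by (rule base_frame[OF bs]) (auto simp: fr fr2)
  have r2: "nr t 2 = J'" using fr r by simp
  show "spec e REC t (\<lambda>t' n2. Q t' (n1 + n2))"
    by (rule REC_spec[OF bt r2 J T]) (use ob ob' post n1 in auto)
qed

end

lemma PROG_spec:
  assumes valid: "valid_instance (eV e) (eK e) (eQ e) (eD e)" and pr: "0 \<le> eA e"
    and capA: "is_atom capI" and capE: "\<And>s. atom e capI s = s\<lparr>nr := (nr s)(2 := cap)\<rparr>"
  shows "spec e (PROG capI) init_st (\<lambda>t n. n \<le> TOT (eV e) (kk e (eV e)) \<and>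
     (eV e = 1 \<longrightarrow> obuy t = {1} \<and> oanc t 0 = (1, 1)) \<and>
     (2 \<le> eV e \<and> 2 \<le> cap \<longrightarrow> alg.RECOK e (min cap (eV e) - 1) t))"
proof -
  have V1: "1 \<le> eV e" and K1: "1 \<le> eK e" using valid unfolding valid_instance_def by auto
  show ?thesis
  proof (cases "eV e = 1")
    case True
    show ?thesis
      unfolding PROG_def SETUP_def spec_seq_eq
      apply (simp add: capA capE init_st_def)
      apply (rule MUL_spec2, simp)
      apply simp
      apply (rule KK_spec, simp)
      apply (simp add: True CASE1_def TOT_def kk_def)
      done
  next
    case False
    then have V2: "2 \<le> eV e" and V1': "eV e \<noteq> Suc 0" using V1 by simp_all
    show ?thesis
    proof (cases "cap < 2")
      case True
      show ?thesis
        unfolding PROG_def SETUP_def spec_seq_eq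
        apply (simp add: capA capE init_st_def)
        apply (rule MUL_spec2, simp)
        apply simp
        apply (rule KK_spec, simp)
        using True apply (simp add: V2 V1' TOT_def not_le[symmetric])
        done
    next
      case False2: False
      interpret A: alg e cap
        by unfold_locales (use valid pr V2 False2 in auto)
      show ?thesis
        unfolding PROG_def SETUP_def spec_seq_eq
        apply (simp add: capA capE init_st_def)
        apply (rule MUL_spec2, simp)
        apply simp
        apply (rule KK_spec, simp)
        using False2 apply (simp add: V2 V1' MAINB_def not_le)
        apply (intro conjI impI)
         apply (rule A.JR_spec[where J' = "eV e - 1"])
               apply (simp add: A.base_def)
        using A.V2 apply simp
        using A.V2 apply simp
        using A.V2 apply simp
        using A.V2 apply simp
        using A.V2 apply simp
         apply simp
        subgoal for t n ta na t' n1 n2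
          using A.TOT_split[of n na n1 n2] by simp
        apply (rule A.JR_spec[where J' = "cap - 1"])
               apply (simp add: A.base_def)
        using A.V2 False2 apply simp
        using A.V2 False2 apply simp
        using A.V2 False2 apply simp
        using A.V2 False2 apply simp
        using A.V2 False2 apply simp
         apply simp
        subgoal for t n ta na t' n1 n2
          using A.TOT_split[of n na n1 n2] by simp
        done
    qed
  qed
qed


lemma TOT_poly: "TOT N N = 15 * N^5 + 114 * N^4 + 132 * N^3 + 17 * N^2 + 75 * N + 151"
  unfolding TOT_def by (simp add: algebra_simps eval_nat_numeral)

lemma TOT_bound: "1 \<le> N \<Longrightarrow> TOT N N \<le> 1000 * N ^ 6"
proof -
  assume N: "1 \<le> N"
  have p: "N ^ k \<le> N ^ 6" if "k \<le> 6" for k using N that by (simp add: power_increasing)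
  have "N ^ 5 \<le> N ^ 6" "N ^ 4 \<le> N ^ 6" "N ^ 3 \<le> N ^ 6" "N ^ 2 \<le> N ^ 6" "N ^ 1 \<le> N ^ 6" "N ^ 0 \<le> N ^ 6"
    by (rule p; simp)+
  then have "N ^ 5 \<le> N ^ 6" "N ^ 4 \<le> N ^ 6" "N ^ 3 \<le> N ^ 6" "N ^ 2 \<le> N ^ 6" "N \<le> N ^ 6" "1 \<le> N ^ 6"
    by simp_all
  then show ?thesis unfolding TOT_poly by simp
qed

lemma vu_K0: "vu K 0 = 1" unfolding vu_def by simp

lemma vu_top: "1 \<le> K \<Longrightarrow> vu K ((V - 1) * K) = real V" if "1 \<le> V"
  unfolding vu_def using that by (simp add: of_nat_diff)

lemma feas_ends:
  assumes v: "valid_instance V K q D" and f: "feasible V K S l r"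
  shows "1 \<in> S" "V \<in> S" "finite S" "S \<subseteq> {1..V}"
proof -
  have V1: "1 \<le> V" and K1: "1 \<le> K" using v unfolding valid_instance_def by auto
  have sub: "S \<subseteq> {1..V}" using f unfolding feasible_def by simp
  have fa: "\<And>u. u \<in> virt_views V K \<Longrightarrow> l u \<in> S \<and> r u \<in> S \<and> real (l u) \<le> u \<and> u \<le> real (r u)"
    using f unfolding feasible_def by blast
  have u1: "1 \<in> virt_views V K" unfolding virt_views_def using vu_K0 by (metis atLeastAtMost_iff image_eqI le0)
  have uV: "real V \<in> virt_views V K" unfolding virt_views_def using vu_top[OF V1 K1]
    by (metis atLeastAtMost_iff image_eqI le0 order_refl)
  have "l 1 \<in> S" "real (l 1) \<le> 1" using fa[OF u1] by auto
  moreover then have "1 \<le> l 1" using sub by auto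
  ultimately show "1 \<in> S" by (metis le_antisym of_nat_le_1_iff)
  have "r (real V) \<in> S" "real V \<le> real (r (real V))" using fa[OF uV] by auto
  moreover then have "r (real V) \<le> V" using sub by auto
  ultimately show "V \<in> S" by (metis le_antisym of_nat_le_iff)
  show "finite S" using sub finite_subset by blast
  show "S \<subseteq> {1..V}" by (rule sub)
qed

lemma V1_facts:
  assumes v: "valid_instance 1 K q D"
  shows "virt_views 1 K = {1}"
    "feasible 1 K {1} (\<lambda>_. 1) (\<lambda>_. 1)"
    "\<And>S' l' r'. feasible 1 K S' l' r' \<Longrightarrow> distortion 1 K q D l' r' = distortion 1 K q D (\<lambda>_. 1) (\<lambda>_. 1) \<and> 1 \<le> card S'"
proof -
  show vv: "virt_views 1 K = {1}" unfolding virt_views_def using vu_K0 by simp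
  show "feasible 1 K {1} (\<lambda>_. 1) (\<lambda>_. 1)" unfolding feasible_def vv by simp
  fix S' l' r' assume f: "feasible 1 K S' l' r'"
  have "1 \<in> S'" "finite S'" "S' \<subseteq> {1..1}" using feas_ends[OF v f] by auto
  then have S1: "S' = {1}" by auto
  have "l' 1 \<in> S'" "r' 1 \<in> S'" using f unfolding feasible_def vv by auto
  then have "l' 1 = 1" "r' 1 = 1" using S1 by auto
  then show "distortion 1 K q D l' r' = distortion 1 K q D (\<lambda>_. 1) (\<lambda>_. 1) \<and> 1 \<le> card S'"
    unfolding distortion_def vv using S1 by simp
qed

lemma anchors_V1: "oanc t 0 = (1, 1) \<Longrightarrow> anchors_of 1 K t (\<lambda>_. 1) (\<lambda>_. 1)"
  unfolding anchors_of_def by simp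

theorem mainTheorem1:
  shows "(\<exists>P c d::nat. \<forall>V K q D B.
            valid_instance V K q D \<longrightarrow>
            (\<exists>t n. exec \<lparr>eV = V, eK = K, eB = B, eA = 0, eQ = q, eD = D\<rparr> P init_st t n \<and>
                   n \<le> c * inst_size V K ^ d \<and>
                   ((\<exists>S l r. feasible V K S l r \<and> card S \<le> B) \<longrightarrow>
                      (\<exists>l r. anchors_of V K t l r \<and> IFLS_H_opt V K q D B (obuy t) l r))))
       \<and> (\<exists>P c d::nat. \<forall>V K q D a.
            valid_instance V K q D \<and> 0 \<le> a \<longrightarrow>
            (\<exists>t n. exec \<lparr>eV = V, eK = K, eB = 0, eA = a, eQ = q, eD = D\<rparr> P init_st t n \<and>
                   n \<le> c * inst_size V K ^ d \<and>
                   (\<exists>l r. anchors_of V K t l r \<and> IFLS_S_opt V K q D a (obuy t) l r)))"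
proof (intro conjI)
  show "\<exists>P c d::nat. \<forall>V K q D B.
            valid_instance V K q D \<longrightarrow>
            (\<exists>t n. exec \<lparr>eV = V, eK = K, eB = B, eA = 0, eQ = q, eD = D\<rparr> P init_st t n \<and>
                   n \<le> c * inst_size V K ^ d \<and>
                   ((\<exists>S l r. feasible V K S l r \<and> card S \<le> B) \<longrightarrow>
                      (\<exists>l r. anchors_of V K t l r \<and> IFLS_H_opt V K q D B (obuy t) l r)))"
  proof (rule exI[of _ "PROG (ReadB 2)"], rule exI[of _ 1000], rule exI[of _ 6], intro allI impI)
    fix V K q D B assume v: "valid_instance V K q D"
    define e where "e = \<lparr>eV = V, eK = K, eB = B, eA = 0, eQ = q, eD = D\<rparr>"
    have V1: "1 \<le> V" and K1: "1 \<le> K" using v unfolding valid_instance_def by auto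
    have "spec e (PROG (ReadB 2)) init_st (\<lambda>t n. n \<le> TOT (eV e) (kk e (eV e)) \<and>
       (eV e = 1 \<longrightarrow> obuy t = {1} \<and> oanc t 0 = (1, 1)) \<and>
       (2 \<le> eV e \<and> 2 \<le> B \<longrightarrow> alg.RECOK e (min B (eV e) - 1) t))"
      by (rule PROG_spec) (use v in \<open>simp_all add: e_def\<close>)
    then obtain t n where ex: "exec e (PROG (ReadB 2)) init_st t n" and nT: "n \<le> TOT V (kk e V)"
      and c1: "V = 1 \<longrightarrow> obuy t = {1} \<and> oanc t 0 = (1, 1)"
      and c2: "2 \<le> V \<and> 2 \<le> B \<longrightarrow> alg.RECOK e (min B V - 1) t"
      unfolding spec_def by (auto simp: e_def)
    have "n \<le> 1000 * inst_size V K ^ 6"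
    proof -
      have a: "V \<le> inst_size V K" and b: "kk e V \<le> inst_size V K"
        unfolding inst_size_def kk_def e_def by simp_all
      have "TOT V (kk e V) \<le> TOT (inst_size V K) (inst_size V K)" by (rule TOT_mono[OF a b])
      also have "\<dots> \<le> 1000 * inst_size V K ^ 6" by (rule TOT_bound) (simp add: inst_size_def)
      finally show ?thesis using nT by simp
    qed
    moreover have "(\<exists>S l r. feasible V K S l r \<and> card S \<le> B) \<longrightarrow>
                      (\<exists>l r. anchors_of V K t l r \<and> IFLS_H_opt V K q D B (obuy t) l r)"
    proof
      assume "\<exists>S l r. feasible V K S l r \<and> card S \<le> B"
      then obtain S0 l0 r0 where f0: "feasible V K S0 l0 r0" "card S0 \<le> B" by blast
      show "\<exists>l r. anchors_of V K t l r \<and> IFLS_H_opt V K q D B (obuy t) l r"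
      proof (cases "V = 1")
        case True
        have v1: "valid_instance 1 K q D" using v True by simp
        have ob: "obuy t = {1}" "oanc t 0 = (1, 1)" using c1 True by auto
        have B1: "1 \<le> B" using V1_facts(3)[OF v1, of S0 l0 r0] f0 True by simp
        have a: "anchors_of 1 K t (\<lambda>_. 1) (\<lambda>_. 1)" by (rule anchors_V1[OF ob(2)])
        have h: "IFLS_H_opt 1 K q D B {1} (\<lambda>_. 1) (\<lambda>_. 1)"
          unfolding IFLS_H_opt_def
        proof (intro conjI allI impI)
          show "feasible 1 K {1} (\<lambda>_. 1) (\<lambda>_. 1)" by (rule V1_facts(2)[OF v1])
          show "card {1::nat} \<le> B" using B1 by simp
          fix S' l' r' assume "feasible 1 K S' l' r' \<and> card S' \<le> B"
          then show "distortion 1 K q D (\<lambda>_. 1) (\<lambda>_. 1) \<le> distortion 1 K q D l' r'"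
            using V1_facts(3)[OF v1, of S' l' r'] by simp
        qed
        show ?thesis using a h True ob by auto
      next
        case False
        then have V2: "2 \<le> V" using V1 by simp
        have "1 \<in> S0" "V \<in> S0" "finite S0" using feas_ends[OF v f0(1)] by auto
        then have "card {1, V} \<le> card S0" by (intro card_mono) auto
        then have B2: "2 \<le> B" using f0(2) False by simp
        interpret A: alg e B by unfold_locales (use v V2 B2 in \<open>simp_all add: e_def\<close>)
        have JJ: "A.JJ = min B V - 1" unfolding A.JJ_def by (simp add: e_def)
        have R: "A.RECOK A.JJ t" using c2 V2 B2 unfolding JJ by simp
        note o = A.opt_from_RECOK[OF R]
        have e': "eV e = V" "eK e = K" "eQ e = q" "eD e = D" "eA e = 0" by (simp_all add: e_def)
        note o1 = o(1)[unfolded e'] and o2 = o(2)[unfolded e'] and o3 = o(3)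
        have o4: "\<forall>S' l' r'. feasible V K S' l' r' \<and> card S' \<le> B \<longrightarrow>
            distortion V K q D (\<lambda>u. fst (oanc t (A.kidx u))) (\<lambda>u. snd (oanc t (A.kidx u))) \<le> distortion V K q D l' r'"
          using o(4) unfolding e' by auto
        show ?thesis
          by (rule exI, rule exI, rule conjI, rule o1) (unfold IFLS_H_opt_def, use o2 o3 o4 in blast)
      qed
    qed
    ultimately show "\<exists>t n. exec \<lparr>eV = V, eK = K, eB = B, eA = 0, eQ = q, eD = D\<rparr> (PROG (ReadB 2)) init_st t n \<and>
                   n \<le> 1000 * inst_size V K ^ 6 \<and>
                   ((\<exists>S l r. feasible V K S l r \<and> card S \<le> B) \<longrightarrow>
                      (\<exists>l r. anchors_of V K t l r \<and> IFLS_H_opt V K q D B (obuy t) l r))"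
      using ex unfolding e_def by blast
  qed
  show "\<exists>P c d::nat. \<forall>V K q D a.
            valid_instance V K q D \<and> 0 \<le> a \<longrightarrow>
            (\<exists>t n. exec \<lparr>eV = V, eK = K, eB = 0, eA = a, eQ = q, eD = D\<rparr> P init_st t n \<and>
                   n \<le> c * inst_size V K ^ d \<and>
                   (\<exists>l r. anchors_of V K t l r \<and> IFLS_S_opt V K q D a (obuy t) l r))"
  proof (rule exI[of _ "PROG (ReadV 2)"], rule exI[of _ 1000], rule exI[of _ 6], intro allI impI)
    fix V K q D and a :: real assume va: "valid_instance V K q D \<and> 0 \<le> a"
    then have v: "valid_instance V K q D" and a0: "0 \<le> a" by auto
    define e where "e = \<lparr>eV = V, eK = K, eB = 0, eA = a, eQ = q, eD = D\<rparr>"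
    have V1: "1 \<le> V" and K1: "1 \<le> K" using v unfolding valid_instance_def by auto
    have "spec e (PROG (ReadV 2)) init_st (\<lambda>t n. n \<le> TOT (eV e) (kk e (eV e)) \<and>
       (eV e = 1 \<longrightarrow> obuy t = {1} \<and> oanc t 0 = (1, 1)) \<and>
       (2 \<le> eV e \<and> 2 \<le> eV e \<longrightarrow> alg.RECOK e (min (eV e) (eV e) - 1) t))"
      by (rule PROG_spec) (use v a0 in \<open>simp_all add: e_def\<close>)
    then obtain t n where ex: "exec e (PROG (ReadV 2)) init_st t n" and nT: "n \<le> TOT V (kk e V)"
      and c1: "V = 1 \<longrightarrow> obuy t = {1} \<and> oanc t 0 = (1, 1)"
      and c2: "2 \<le> V \<longrightarrow> alg.RECOK e (V - 1) t"
      unfolding spec_def by (auto simp: e_def)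
    have "n \<le> 1000 * inst_size V K ^ 6"
    proof -
      have a: "V \<le> inst_size V K" and b: "kk e V \<le> inst_size V K"
        unfolding inst_size_def kk_def e_def by simp_all
      have "TOT V (kk e V) \<le> TOT (inst_size V K) (inst_size V K)" by (rule TOT_mono[OF a b])
      also have "\<dots> \<le> 1000 * inst_size V K ^ 6" by (rule TOT_bound) (simp add: inst_size_def)
      finally show ?thesis using nT by simp
    qed
    moreover have "\<exists>l r. anchors_of V K t l r \<and> IFLS_S_opt V K q D a (obuy t) l r"
    proof (cases "V = 1")
      case True
      have v1: "valid_instance 1 K q D" using v True by simp
      have ob: "obuy t = {1}" "oanc t 0 = (1, 1)" using c1 True by auto
      have an: "anchors_of 1 K t (\<lambda>_. 1) (\<lambda>_. 1)" by (rule anchors_V1[OF ob(2)])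
      have h: "IFLS_S_opt 1 K q D a {1} (\<lambda>_. 1) (\<lambda>_. 1)"
        unfolding IFLS_S_opt_def
      proof (intro conjI allI impI)
        show "feasible 1 K {1} (\<lambda>_. 1) (\<lambda>_. 1)" by (rule V1_facts(2)[OF v1])
        fix S' l' r' assume f: "feasible 1 K S' l' r'"
        have "distortion 1 K q D l' r' = distortion 1 K q D (\<lambda>_. 1) (\<lambda>_. 1)" "1 \<le> card S'"
          using V1_facts(3)[OF v1 f] by auto
        moreover have "a * 1 \<le> a * real (card S')"
          by (rule mult_left_mono) (use a0 calculation(2) in simp_all)
        ultimately show "distortion 1 K q D (\<lambda>_. 1) (\<lambda>_. 1) + a * real (card {1::nat}) \<le>
            distortion 1 K q D l' r' + a * real (card S')" by simp
      qed
      show ?thesis using an h True ob by auto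
    next
      case False
      then have V2: "2 \<le> V" using V1 by simp
      interpret A: alg e V by unfold_locales (use v V2 a0 in \<open>simp_all add: e_def\<close>)
      have JJ: "A.JJ = V - 1" unfolding A.JJ_def by (simp add: e_def)
      have R: "A.RECOK A.JJ t" using c2 V2 unfolding JJ by simp
      note o = A.opt_from_RECOK[OF R]
      have e': "eV e = V" "eK e = K" "eQ e = q" "eD e = D" "eA e = a" by (simp_all add: e_def)
      note o1 = o(1)[unfolded e'] and o2 = o(2)[unfolded e']
      have o4: "\<forall>S' l' r'. feasible V K S' l' r' \<longrightarrow>
          distortion V K q D (\<lambda>u. fst (oanc t (A.kidx u))) (\<lambda>u. snd (oanc t (A.kidx u))) + a * real (card (obuy t))
          \<le> distortion V K q D l' r' + a * real (card S')"
      proof (intro allI impI)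
        fix S' l' r' assume f: "feasible V K S' l' r'"
        have "card S' \<le> V" using feas_ends[OF v f] by (metis card_atLeastAtMost card_mono diff_Suc_1 finite_atLeastAtMost)
        then show "distortion V K q D (\<lambda>u. fst (oanc t (A.kidx u))) (\<lambda>u. snd (oanc t (A.kidx u))) + a * real (card (obuy t))
          \<le> distortion V K q D l' r' + a * real (card S')"
          using o(4)[of S' l' r'] f unfolding e' by simp
      qed
      show ?thesis
        by (rule exI, rule exI, rule conjI, rule o1) (unfold IFLS_S_opt_def, use o2 o4 in blast)
    qed
    ultimately show "\<exists>t n. exec \<lparr>eV = V, eK = K, eB = 0, eA = a, eQ = q, eD = D\<rparr> (PROG (ReadV 2)) init_st t n \<and>
                   n \<le> 1000 * inst_size V K ^ 6 \<and>
                   (\<exists>l r. anchors_of V K t l r \<and> IFLS_S_opt V K q D a (obuy t) l r)"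
      using ex unfolding e_def by blast
  qed
qed


end
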